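(* Let $d=d(n)$ be a positive integer depending on the positive integer $n$; asymptotic statements refer to $n\to\infty$. (a) If $d>n^3/2$, then $$1\leq \frac{p_d(n)}{\binom{d+n-2}{d-1}}<\frac{1}{1-\frac{n^3}{2d}}.$$ (b) If $d n^{-2}\to\infty$ as $n\to\infty$, then $\log p_d(n)=(n-1)(\log d-\log n+1)+o(n)$. (c) If $cn^2\leq d\leq Cn^2$ for some positive constants $c$ and $C$, then $\log p_d(n)=n\log n+O(n)$. (d) If $d n^{-2}\to 0$ and $\log d\geq \log n+o(\log n)$ as $n\to\infty$, then $\log p_d(n)=n\log n+o(n\log n)$.
   Context: Let $\mathbb{Z}_+=\{0,1,2,\dots\}$. A set $S\subset\mathbb{Z}_+^d$ is a lower set if whenever $\mathbf{x}\in S$ and $\mathbf{x}'\in\mathbb{Z}_+^d$ satisfies $x'_i\leq x_i$ for all $i$, then $\mathbf{x}'\in S$. For positive integers $d,n$, $p_d(n)$ denotes the number of lower sets in $\mathbb{Z}_+^d$ with exactly $n$ points. $\log$ is the natural logarithm. *)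

theory Defs
  imports Complex_Main "HOL-Library.Landau_Symbols"
begin

text \<open>Points of \<open>Z_+^d\<close> are encoded as functions \<open>nat \<Rightarrow> nat\<close> vanishing at all
  coordinates \<open>i \<ge> d\<close> (coordinates are indexed by \<open>0..<d\<close>).\<close>

definition zplus :: "nat \<Rightarrow> (nat \<Rightarrow> nat) set" where
  "zplus d = {x. \<forall>i\<ge>d. x i = 0}"

definition lower_set :: "nat \<Rightarrow> (nat \<Rightarrow> nat) set \<Rightarrow> bool" where
  "lower_set d S \<longleftrightarrow> S \<subseteq> zplus d \<and>
     (\<forall>x\<in>S. \<forall>x'\<in>zplus d. (\<forall>i<d. x' i \<le> x i) \<longrightarrow> x' \<in> S)"

definition p :: "nat \<Rightarrow> nat \<Rightarrow> nat" where
  "p d n = card {S. lower_set d S \<and> finite S \<and> card S = n}"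

end

theory Submission
  imports Defs
begin


lemma choose_mono_top: "n \<le> n' \<Longrightarrow> n choose k \<le> n' choose (k::nat)"
proof (induction n' arbitrary: k)
  case 0 then show ?case by simp
next
  case (Suc n')
  show ?case
  proof (cases "n = Suc n'")
    case True then show ?thesis by simp
  next
    case False
    then have "n \<le> n'" using Suc.prems by simp
    then have "n choose k \<le> n' choose k" using Suc.IH by simp
    also have "\<dots> \<le> Suc n' choose k"
      by (cases k) (simp_all)
    finally show ?thesis .
  qed
qed

lemma choose_prod_le: "(N choose k) * (M choose (r - k)) \<le> (N + M) choose (r::nat)" if "k \<le> r"
proof -
  have "(N choose k) * (M choose (r - k)) \<le> (\<Sum>j\<le>r. (N choose j) * (M choose (r - j)))"
    using that by (intro member_le_sum) auto
  also have "\<dots> = (N + M) choose r" by (rule vandermonde)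
  finally show ?thesis .
qed

fun chainW :: "('a set \<Rightarrow> 'a set) \<Rightarrow> 'a set \<Rightarrow> 'a set list \<Rightarrow> bool" where
  "chainW W V [] = True"
| "chainW W V (Y # ys) = (Y \<subseteq> V \<and> chainW W (W Y) ys)"

definition towers :: "('a set \<Rightarrow> 'a set) \<Rightarrow> 'a set \<Rightarrow> nat \<Rightarrow> nat \<Rightarrow> 'a set list set" where
  "towers W V L r = {ys. length ys = L \<and> chainW W V ys \<and> (\<forall>Y\<in>set ys. finite Y) \<and> sum_list (map card ys) = r}"

definition tb :: "nat \<Rightarrow> nat \<Rightarrow> nat \<Rightarrow> nat" where
  "tb c N r = (if r = 0 then 1 else if N = 0 then 0 else 2^(r-1) * ((N + c*r) choose r))"

lemma tb_mono: "N \<le> N' \<Longrightarrow> tb c N r \<le> tb c N' r"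
  unfolding tb_def by (auto intro: choose_mono_top)

lemma towers_0: "towers W V 0 r = (if r = 0 then {[]} else {})"
  unfolding towers_def by auto

lemma towers_Suc: "towers W V (Suc L) r =
   (\<Union>Y\<in>{Y. Y \<subseteq> V \<and> finite Y \<and> card Y \<le> r}. (\<lambda>ys. Y # ys) ` towers W (W Y) L (r - card Y))"
  unfolding towers_def
proof (rule set_eqI)
  fix ys
  show "ys \<in> {ys. length ys = Suc L \<and> chainW W V ys \<and> (\<forall>Y\<in>set ys. finite Y) \<and> sum_list (map card ys) = r} \<longleftrightarrow>
    ys \<in> (\<Union>Y\<in>{Y. Y \<subseteq> V \<and> finite Y \<and> card Y \<le> r}. (\<lambda>ys. Y # ys) ` {ys. length ys = L \<and> chainW W (W Y) ys \<and> (\<forall>Y\<in>set ys. finite Y) \<and> sum_list (map card ys) = r - card Y})"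
  proof (cases ys)
    case Nil then show ?thesis by auto
  next
    case (Cons Y ys')
    show ?thesis
    proof
      assume "ys \<in> {ys. length ys = Suc L \<and> chainW W V ys \<and> (\<forall>Y\<in>set ys. finite Y) \<and> sum_list (map card ys) = r}"
      then show "ys \<in> (\<Union>Y\<in>{Y. Y \<subseteq> V \<and> finite Y \<and> card Y \<le> r}. (\<lambda>ys. Y # ys) ` {ys. length ys = L \<and> chainW W (W Y) ys \<and> (\<forall>Y\<in>set ys. finite Y) \<and> sum_list (map card ys) = r - card Y})"
        using Cons by (intro UN_I[of Y]) auto
    next
      assume "ys \<in> (\<Union>Y\<in>{Y. Y \<subseteq> V \<and> finite Y \<and> card Y \<le> r}. (\<lambda>ys. Y # ys) ` {ys. length ys = L \<and> chainW W (W Y) ys \<and> (\<forall>Y\<in>set ys. finite Y) \<and> sum_list (map card ys) = r - card Y})"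
      then show "ys \<in> {ys. length ys = Suc L \<and> chainW W V ys \<and> (\<forall>Y\<in>set ys. finite Y) \<and> sum_list (map card ys) = r}"
        by auto
    qed
  qed
qed

lemma sum2pow: "(\<Sum>j<n. (2::nat)^j) + 1 = 2^n"
  by (induction n) auto

lemma geom2: "(\<Sum>k\<in>{1..<r}. (2::nat)^(r-k-1)) + 1 = 2^(r-1)" if "r \<ge> 1"
proof -
  have "(\<Sum>k\<in>{1..<r}. (2::nat)^(r-k-1)) = (\<Sum>j<r-1. 2^j)"
  proof (rule sum.reindex_bij_witness[of _ "\<lambda>j. r - 1 - j" "\<lambda>k. r - k - 1"])
  qed (use that in auto)
  also have "(\<Sum>j<r-1. (2::nat)^j) + 1 = 2^(r-1)"
    using sum2pow[of "r-1"] .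
  finally show ?thesis .
qed

lemma tb_step: "(\<Sum>k\<le>r. (N choose k) * tb c (c*k) (r-k)) \<le> tb c N r"
proof (cases "r = 0")
  case True then show ?thesis by (simp add: tb_def)
next
  case r: False
  show ?thesis
  proof (cases "N = 0")
    case True
    then have "(\<Sum>k\<le>r. (N choose k) * tb c (c*k) (r-k)) = 0"
      using r by (intro sum.neutral) (auto simp: tb_def)
    then show ?thesis by (metis zero_le)
  next
    case N: False
    let ?B = "(N + c*r) choose r"
    have "(\<Sum>k\<le>r. (N choose k) * tb c (c*k) (r-k)) \<le>
          (\<Sum>k\<le>r. (if k = 0 then 0 else if k = r then 1 else 2^(r-k-1)) * ?B)"
    proof (intro sum_mono)
      fix k assume k: "k \<in> {..r}"
      show "(N choose k) * tb c (c*k) (r-k) \<le> (if k = 0 then 0 else if k = r then 1 else 2^(r-k-1)) * ?B"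
      proof (cases "k = 0")
        case True then show ?thesis using r by (simp add: tb_def)
      next
        case k0: False
        show ?thesis
        proof (cases "k = r")
          case True
          then show ?thesis using choose_mono_top[of N "N + c*r" r] r by (simp add: tb_def)
        next
          case False
          then have kr: "k < r" using k by auto
          have "tb c (c*k) (r-k) \<le> 2^(r-k-1) * ((c*k + c*(r-k)) choose (r-k))"
            unfolding tb_def using kr by auto
          also have "c*k + c*(r-k) = c*r" using kr by (simp add: diff_mult_distrib2)
          finally have "(N choose k) * tb c (c*k) (r-k) \<le> 2^(r-k-1) * ((N choose k) * ((c*r) choose (r-k)))"
            by (metis (no_types, lifting) mult.left_commute mult_le_mono2)
          also have "\<dots> \<le> 2^(r-k-1) * ?B"
            using choose_prod_le[of k r N "c*r"] kr by simp
          finally show ?thesis using k0 False by simp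
        qed
      qed
    qed
    also have "\<dots> = (\<Sum>k\<le>r. (if k = 0 then 0 else if k = r then 1 else 2^(r-k-1))) * ?B"
      by (simp add: sum_distrib_right)
    also have "(\<Sum>k\<le>r. (if k = 0 then 0 else if k = r then 1 else (2::nat)^(r-k-1))) = 2^(r-1)"
    proof -
      have e: "{..r} = insert 0 (insert r {1..<r})" using r by auto
      have "(\<Sum>k\<le>r. (if k = 0 then 0 else if k = r then 1 else (2::nat)^(r-k-1)))
          = 1 + (\<Sum>k\<in>{1..<r}. (if k = 0 then 0 else if k = r then 1 else (2::nat)^(r-k-1)))"
        unfolding e using r by simp
      also have "(\<Sum>k\<in>{1..<r}. (if k = 0 then 0 else if k = r then 1 else (2::nat)^(r-k-1)))
          = (\<Sum>k\<in>{1..<r}. 2^(r-k-1))" by (intro sum.cong) auto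
      finally show ?thesis using geom2[of r] r by simp
    qed
    finally show ?thesis using r N by (simp add: tb_def)
  qed
qed

lemma sum_by_card:
  assumes "finite V"
  shows "(\<Sum>Y\<in>{Y. Y \<subseteq> V \<and> finite Y \<and> card Y \<le> r}. g (card Y)) = (\<Sum>k\<le>r. (card V choose k) * (g k :: nat))"
proof -
  let ?I = "{Y. Y \<subseteq> V \<and> finite Y \<and> card Y \<le> r}"
  have fI: "finite ?I" by (rule finite_subset[of _ "Pow V"]) (use assms in auto)
  have "(\<Sum>Y\<in>?I. g (card Y)) = (\<Sum>k\<le>r. (\<Sum>Y\<in>{Y. Y \<in> ?I \<and> card Y = k}. g (card Y)))"
    by (rule sum.group[symmetric]) (use fI in auto)
  also have "\<dots> = (\<Sum>k\<le>r. (card V choose k) * g k)"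
  proof (rule sum.cong[OF refl])
    fix k assume k: "k \<in> {..r}"
    have e: "{Y. Y \<in> ?I \<and> card Y = k} = {Y. Y \<subseteq> V \<and> card Y = k}"
      using k finite_subset[OF _ assms] by blast
    have "(\<Sum>Y\<in>{Y. Y \<in> ?I \<and> card Y = k}. g (card Y)) = (\<Sum>Y\<in>{Y. Y \<subseteq> V \<and> card Y = k}. g k)"
      unfolding e by (intro sum.cong) auto
    also have "\<dots> = (card V choose k) * g k" using n_subsets[OF assms, of k] by simp
    finally show "(\<Sum>Y\<in>{Y. Y \<in> ?I \<and> card Y = k}. g (card Y)) = (card V choose k) * g k" .
  qed
  finally show ?thesis .
qed

lemma towers_card:
  assumes "finite V" and W: "\<And>Y. finite Y \<Longrightarrow> finite (W Y) \<and> card (W Y) \<le> c * card Y"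
  shows "finite (towers W V L r) \<and> card (towers W V L r) \<le> tb c (card V) r"
  using assms(1)
proof (induction L arbitrary: V r)
  case 0
  then show ?case by (auto simp: towers_0 tb_def)
next
  case (Suc L)
  let ?I = "{Y. Y \<subseteq> V \<and> finite Y \<and> card Y \<le> r}"
  let ?F = "\<lambda>Y. (\<lambda>ys. Y # ys) ` towers W (W Y) L (r - card Y)"
  have fI: "finite ?I" by (rule finite_subset[of _ "Pow V"]) (use Suc.prems in auto)
  have IH: "finite (towers W (W Y) L (r - card Y)) \<and> card (towers W (W Y) L (r - card Y)) \<le> tb c (c * card Y) (r - card Y)"
    if "Y \<in> ?I" for Y
  proof -
    have fY: "finite Y" using that by auto
    have "finite (W Y)" using W[OF fY] by simp
    from Suc.IH[OF this, of "r - card Y"] W[OF fY] tb_mono[of "card (W Y)" "c * card Y" c "r - card Y"]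
    show ?thesis by linarith
  qed
  have fin: "finite (\<Union>Y\<in>?I. ?F Y)"
    by (intro finite_UN_I fI finite_imageI) (use IH in blast)
  have "card (\<Union>Y\<in>?I. ?F Y) \<le> (\<Sum>Y\<in>?I. card (?F Y))" by (rule card_UN_le[OF fI])
  also have "\<dots> \<le> (\<Sum>Y\<in>?I. tb c (c * card Y) (r - card Y))"
  proof (rule sum_mono)
    fix Y assume Y: "Y \<in> ?I"
    show "card (?F Y) \<le> tb c (c * card Y) (r - card Y)"
      using card_image_le[of "towers W (W Y) L (r - card Y)" "\<lambda>ys. Y # ys"] IH[OF Y] by linarith
  qed
  also have "\<dots> = (\<Sum>k\<le>r. (card V choose k) * tb c (c*k) (r-k))"
    by (rule sum_by_card[OF Suc.prems])
  also have "\<dots> \<le> tb c (card V) r" by (rule tb_step)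
  finally have cd: "card (\<Union>Y\<in>?I. ?F Y) \<le> tb c (card V) r" .
  have eq: "towers W V (Suc L) r = (\<Union>Y\<in>?I. ?F Y)" by (rule towers_Suc)
  show ?case unfolding eq using fin cd by blast
qed


definition supp :: "(nat \<Rightarrow> nat) \<Rightarrow> nat set" where "supp x = {i. x i \<noteq> 0}"
definition ax :: "nat \<Rightarrow> nat \<Rightarrow> nat \<Rightarrow> nat" where "ax i c = (\<lambda>t. if t = i then c else 0)"
definition z0 :: "nat \<Rightarrow> nat" where "z0 = (\<lambda>_. 0)"
definition SA :: "nat \<Rightarrow> (nat \<Rightarrow> nat) \<Rightarrow> (nat \<Rightarrow> nat) set" where
  "SA d L = insert z0 (\<Union>i\<in>{..<d}. ax i ` {1..L i})"
definition Lsets :: "nat \<Rightarrow> nat \<Rightarrow> (nat \<Rightarrow> nat) set" where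
  "Lsets d a = {L. (\<forall>i\<ge>d. L i = 0) \<and> sum L {..<d} = a - 1}"
definition AX :: "nat \<Rightarrow> nat \<Rightarrow> (nat \<Rightarrow> nat) set set" where
  "AX d a = {A. lower_set d A \<and> finite A \<and> card A = a \<and> (\<forall>x\<in>A. card (supp x) \<le> 1)}"
definition LS :: "nat \<Rightarrow> nat \<Rightarrow> (nat \<Rightarrow> nat) set set" where
  "LS d n = {S. lower_set d S \<and> finite S \<and> card S = n}"

lemma p_LS: "p d n = card (LS d n)" unfolding p_def LS_def by simp

lemma ax_eq_iff: "c \<ge> 1 \<Longrightarrow> c' \<ge> 1 \<Longrightarrow> ax i c = ax j c' \<longleftrightarrow> i = j \<and> c = c'"
  unfolding ax_def by (metis not_one_le_zero)

lemma ax_ne_z0: "c \<ge> 1 \<Longrightarrow> ax i c \<noteq> z0"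
  unfolding ax_def z0_def by (metis not_one_le_zero)

lemma z0_ne_ax: "c \<ge> 1 \<Longrightarrow> z0 \<noteq> ax i c"
  using ax_ne_z0 by metis

lemma card_SA: "finite (SA d L) \<and> card (SA d L) = 1 + sum L {..<d}"
proof -
  have inj: "inj_on (ax i) {1..L i}" for i by (auto intro: inj_onI simp: ax_eq_iff)
  have disj: "\<forall>i\<in>{..<d}. \<forall>j\<in>{..<d}. i \<noteq> j \<longrightarrow> ax i ` {1..L i} \<inter> ax j ` {1..L j} = {}"
    by (auto simp: ax_eq_iff)
  have "card (\<Union>i\<in>{..<d}. ax i ` {1..L i}) = (\<Sum>i<d. card (ax i ` {1..L i}))"
    by (rule card_UN_disjoint) (use disj in auto)
  also have "\<dots> = sum L {..<d}" using inj by (simp add: card_image)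
  finally have c: "card (\<Union>i\<in>{..<d}. ax i ` {1..L i}) = sum L {..<d}" .
  have "z0 \<notin> (\<Union>i\<in>{..<d}. ax i ` {1..L i})" using z0_ne_ax by auto
  then show ?thesis unfolding SA_def using c by simp
qed

lemma zplus_le: "x \<in> zplus d \<Longrightarrow> i \<ge> d \<Longrightarrow> x i = 0" unfolding zplus_def by auto

lemma supp_sub: "x \<in> zplus d \<Longrightarrow> supp x \<subseteq> {..<d}"
proof
  fix i assume x: "x \<in> zplus d" and "i \<in> supp x"
  then have "x i \<noteq> 0" by (simp add: supp_def)
  then show "i \<in> {..<d}" using x unfolding zplus_def by (cases "i < d") auto
qed

lemma supp_finite: "x \<in> zplus d \<Longrightarrow> finite (supp x)"
  using supp_sub finite_subset by blast

lemma supp_le1: "card (supp x) \<le> 1 \<Longrightarrow> finite (supp x) \<Longrightarrow> x = z0 \<or> (\<exists>i. x i \<ge> 1 \<and> x = ax i (x i))"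
proof -
  assume c: "card (supp x) \<le> 1" and f: "finite (supp x)"
  show ?thesis
  proof (cases "supp x = {}")
    case True
    then have "x t = 0" for t unfolding supp_def by blast
    then have "x = z0" unfolding z0_def by (rule ext)
    then show ?thesis ..
  next
    case False
    have "card (supp x) \<noteq> 0" using False f by simp
    then have "card (supp x) = 1" using c by linarith
    then obtain i where i: "supp x = {i}" by (rule card_1_singletonE)
    then have xi: "x i \<noteq> 0" unfolding supp_def by blast
    have "x t = 0" if "t \<noteq> i" for t using i that unfolding supp_def by blast
    then have "x = ax i (x i)" unfolding ax_def by (intro ext) simp
    then show ?thesis using xi by (intro disjI2 exI[of _ i]) simp
  qed
qed

lemma SA_lower: "\<forall>i\<ge>d. L i = 0 \<Longrightarrow> lower_set d (SA d L)"
  unfolding lower_set_def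
proof (intro conjI ballI impI)
  show "SA d L \<subseteq> zplus d" unfolding SA_def zplus_def ax_def z0_def by auto
next
  fix x x' assume x: "x \<in> SA d L" and x': "x' \<in> zplus d" and le: "\<forall>i<d. x' i \<le> x i"
  have le2: "x' i \<le> x i" for i
  proof (cases "i < d")
    case True then show ?thesis using le by auto
  next
    case False then show ?thesis using zplus_le[OF x'] by simp
  qed
  show "x' \<in> SA d L"
  proof (cases "x = z0")
    case True
    then have "x' = z0" using le2 by (auto simp: z0_def fun_eq_iff)
    then show ?thesis by (simp add: SA_def)
  next
    case False
    then obtain i c where i: "i < d" "1 \<le> c" "c \<le> L i" "x = ax i c" using x by (auto simp: SA_def)
    have "x' t = 0" if "t \<noteq> i" for t using le2[of t] that i(4) by (simp add: ax_def)
    then have x'eq: "x' = ax i (x' i)" by (auto simp: ax_def fun_eq_iff)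
    have "x' i \<le> c" using le2[of i] i(4) by (simp add: ax_def)
    show ?thesis
    proof (cases "x' i = 0")
      case True then have "x' = z0" using x'eq by (simp add: ax_def z0_def fun_eq_iff)
      then show ?thesis by (simp add: SA_def)
    next
      case False
      then show ?thesis unfolding SA_def using i \<open>x' i \<le> c\<close> x'eq
        by (intro insertI2 UN_I[of i]) auto
    qed
  qed
qed

lemma SA_supp: "x \<in> SA d L \<Longrightarrow> card (supp x) \<le> 1"
proof -
  assume "x \<in> SA d L"
  then have "x = z0 \<or> (\<exists>i c. x = ax i c)" by (auto simp: SA_def)
  then have "supp x \<subseteq> {i. True} \<and> (\<exists>i. supp x \<subseteq> {i})"
    by (auto simp: supp_def z0_def ax_def split: if_splits)
  then obtain i where "supp x \<subseteq> {i}" by auto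
  then show ?thesis using card_mono[of "{i}" "supp x"] by auto
qed

lemma SA_in_AX: "L \<in> Lsets d a \<Longrightarrow> a \<ge> 1 \<Longrightarrow> SA d L \<in> AX d a"
  unfolding AX_def Lsets_def using card_SA[of d L] SA_lower[of d L] SA_supp[of _ d L] by auto

lemma SA_count: "i < d \<Longrightarrow> card {c. 1 \<le> c \<and> ax i c \<in> SA d L} = L i"
proof -
  assume i: "i < d"
  have "{c. 1 \<le> c \<and> ax i c \<in> SA d L} = {1..L i}"
    using i by (auto simp: SA_def ax_eq_iff ax_ne_z0)
  then show ?thesis by simp
qed

lemma SA_inj: "inj_on (SA d) (Lsets d a)"
proof (rule inj_onI)
  fix L L' assume L: "L \<in> Lsets d a" and L': "L' \<in> Lsets d a" and eq: "SA d L = SA d L'"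
  show "L = L'"
  proof
    fix i show "L i = L' i"
    proof (cases "i < d")
      case True then show ?thesis using SA_count[of i d L] SA_count[of i d L'] eq by simp
    next
      case False then show ?thesis using L L' by (simp add: Lsets_def)
    qed
  qed
qed

lemma lower_in: "lower_set d S \<Longrightarrow> x \<in> S \<Longrightarrow> x' \<in> zplus d \<Longrightarrow> (\<forall>i<d. x' i \<le> x i) \<Longrightarrow> x' \<in> S"
  unfolding lower_set_def by blast

lemma lower_zplus: "lower_set d S \<Longrightarrow> x \<in> S \<Longrightarrow> x \<in> zplus d"
  unfolding lower_set_def by blast

lemma z0_in: "lower_set d S \<Longrightarrow> S \<noteq> {} \<Longrightarrow> z0 \<in> S"
proof -
  assume l: "lower_set d S" and "S \<noteq> {}"
  then obtain x where "x \<in> S" by auto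
  then show ?thesis using lower_in[OF l] by (auto simp: z0_def zplus_def)
qed

lemma ax_in: "lower_set d S \<Longrightarrow> x \<in> S \<Longrightarrow> c \<le> x i \<Longrightarrow> ax i c \<in> S"
proof -
  assume l: "lower_set d S" and x: "x \<in> S" and c: "c \<le> x i"
  have xz: "x \<in> zplus d" using lower_zplus[OF l x] .
  have "ax i c \<in> zplus d"
  proof (cases "c = 0")
    case True then show ?thesis by (auto simp: ax_def zplus_def)
  next
    case False
    then have "x i \<noteq> 0" using c by auto
    then have "i < d" using zplus_le[OF xz, of i] by (cases "i < d") auto
    then show ?thesis by (auto simp: ax_def zplus_def)
  qed
  then show ?thesis using lower_in[OF l x] c by (auto simp: ax_def)
qed

lemma AX_SA: "A \<in> AX d a \<Longrightarrow> a \<ge> 1 \<Longrightarrow> \<exists>L\<in>Lsets d a. A = SA d L"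
proof -
  assume A: "A \<in> AX d a" and a: "a \<ge> 1"
  have l: "lower_set d A" and fA: "finite A" and cA: "card A = a" and s1: "\<forall>x\<in>A. card (supp x) \<le> 1"
    using A by (auto simp: AX_def)
  define C where "C i = {c. 1 \<le> c \<and> ax i c \<in> A}" for i
  define L where "L i = (if i < d then card (C i) else 0)" for i
  have finC: "finite (C i)" for i
  proof -
    have "inj_on (ax i) (C i)" by (auto intro: inj_onI simp: C_def ax_eq_iff)
    moreover have "ax i ` C i \<subseteq> A" by (auto simp: C_def)
    ultimately show ?thesis using fA by (meson finite_imageD finite_subset)
  qed
  have Ceq: "C i = {1..card (C i)}" for i
  proof (cases "C i = {}")
    case True then show ?thesis by simp
  next
    case False
    let ?M = "Max (C i)"
    have M: "?M \<in> C i" using False finC by simp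
    have down: "c \<in> C i" if "1 \<le> c" "c \<le> ?M" for c
    proof -
      have "ax i ?M \<in> A" using M by (simp add: C_def)
      moreover have "?M \<le> ax i ?M i" by (simp add: ax_def)
      ultimately have "ax i c \<in> A" using ax_in[OF l, of "ax i ?M" c i] that by simp
      then show ?thesis using that by (simp add: C_def)
    qed
    obtain M where M: "M = ?M" by simp
    have e: "C i = {1..M}"
    proof
      show "C i \<subseteq> {1..M}" using finC M by (auto simp: C_def intro: Max_ge)
      show "{1..M} \<subseteq> C i" using down M by auto
    qed
    have "card (C i) = M" unfolding e by simp
    then show ?thesis using e by simp
  qed
  have A_eq: "A = SA d L"
  proof
    show "A \<subseteq> SA d L"
    proof
      fix x assume x: "x \<in> A"
      have xz: "x \<in> zplus d" using lower_zplus[OF l x] .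
      from supp_le1[OF s1[rule_format, OF x] supp_finite[OF xz]]
      show "x \<in> SA d L"
      proof
        assume "x = z0" then show ?thesis by (simp add: SA_def)
      next
        assume "\<exists>i. 1 \<le> x i \<and> x = ax i (x i)"
        then obtain i where i: "1 \<le> x i" "x = ax i (x i)" by auto
        have id: "i < d" using zplus_le[OF xz, of i] i(1) by (cases "i < d") auto
        have "x i \<in> C i" using i x by (simp add: C_def)
        then have "x i \<le> L i" using Ceq[of i] id by (simp add: L_def) (metis atLeastAtMost_iff)
        then show ?thesis unfolding SA_def using i id by (intro insertI2 UN_I[of i]) auto
      qed
    qed
    show "SA d L \<subseteq> A"
    proof
      fix x assume "x \<in> SA d L"
      then consider "x = z0" | i c where "i < d" "1 \<le> c" "c \<le> L i" "x = ax i c" by (auto simp: SA_def)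
      then show "x \<in> A"
      proof cases
        case 1
        have "A \<noteq> {}" using cA a by auto
        then show ?thesis using z0_in[OF l] 1 by simp
      next
        case 2
        then have "c \<in> C i" using Ceq[of i] by (simp add: L_def) (metis atLeastAtMost_iff)
        then show ?thesis using 2 by (simp add: C_def)
      qed
    qed
  qed
  have "L \<in> Lsets d a" using card_SA[of d L] A_eq cA by (auto simp: Lsets_def L_def)
  then show ?thesis using A_eq by blast
qed

lemma AX_bij: "a \<ge> 1 \<Longrightarrow> bij_betw (SA d) (Lsets d a) (AX d a)"
  unfolding bij_betw_def using SA_inj SA_in_AX AX_SA by blast

lemma Lsets_card: "finite (Lsets d a) \<and> card (Lsets d a) = (a - 1 + d - 1) choose (a - 1)"
proof -
  let ?T = "{l::nat list. size l = d \<and> sum_list l = a - 1}"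
  have bij: "bij_betw (\<lambda>L. map L [0..<d]) (Lsets d a) ?T"
  proof (rule bij_betw_byWitness[where f' = "\<lambda>l i. if i < length l then l ! i else 0"])
    show "\<forall>L\<in>Lsets d a. (\<lambda>i. if i < length (map L [0..<d]) then map L [0..<d] ! i else 0) = L"
      by (auto simp: Lsets_def fun_eq_iff)
    show "\<forall>l\<in>?T. map (\<lambda>i. if i < length l then l ! i else 0) [0..<d] = l"
      by (auto intro: nth_equalityI)
    show "(\<lambda>L. map L [0..<d]) ` Lsets d a \<subseteq> ?T"
    proof
      fix l assume "l \<in> (\<lambda>L. map L [0..<d]) ` Lsets d a"
      then obtain L where L: "L \<in> Lsets d a" "l = map L [0..<d]" by auto
      have "sum_list l = sum L {0..<d}" using L(2) sum_set_upt_conv_sum_list_nat[of L 0 d] by simp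
      also have "\<dots> = a - 1" using L(1) by (simp add: Lsets_def atLeast0LessThan)
      finally show "l \<in> ?T" using L by simp
    qed
    show "(\<lambda>l i. if i < length l then l ! i else 0) ` ?T \<subseteq> Lsets d a"
    proof
      fix L assume "L \<in> (\<lambda>l i. if i < length l then l ! i else 0) ` ?T"
      then obtain l where l: "l \<in> ?T" "L = (\<lambda>i. if i < length l then l ! i else 0)" by auto
      have "sum L {..<d} = sum ((!) l) {..<length l}" using l by (intro sum.cong) auto
      also have "\<dots> = sum_list l" by (simp add: sum_list_sum_nth atLeast0LessThan)
      finally show "L \<in> Lsets d a" using l by (auto simp: Lsets_def)
    qed
  qed
  have fT: "finite ?T"
  proof -
    have "?T \<subseteq> {l. set l \<subseteq> {..a} \<and> length l = d}"
    proof (clarsimp)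
      fix l x assume "x \<in> set l" "sum_list l = a - Suc 0"
      then show "x \<le> a" using member_le_sum_list[of x l] by simp
    qed
    then show ?thesis by (rule finite_subset) (rule finite_lists_length_eq, simp)
  qed
  show ?thesis using bij_betw_finite[OF bij] fT bij_betw_same_card[OF bij] card_length_sum_list[of d "a-1"]
    by simp
qed

lemma AX_card: "a \<ge> 1 \<Longrightarrow> finite (AX d a) \<and> card (AX d a) = (a - 1 + d - 1) choose (a - 1)"
  using AX_bij[of a d] Lsets_card[of d a] bij_betw_finite bij_betw_same_card by metis


definition U1 :: "(nat \<Rightarrow> nat) set \<Rightarrow> (nat \<Rightarrow> nat) set" where "U1 A = A - {z0}"
definition Vs :: "(nat \<Rightarrow> nat) set \<Rightarrow> (nat \<Rightarrow> nat) set" where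
  "Vs A = (\<lambda>P. (\<lambda>t. Max ((\<lambda>u. u t) ` P))) ` {P. P \<subseteq> U1 A \<and> card P = 2}"
definition Ws :: "(nat \<Rightarrow> nat) set \<Rightarrow> (nat \<Rightarrow> nat) set \<Rightarrow> (nat \<Rightarrow> nat) set" where
  "Ws A Y = (\<lambda>(y,u). sup y u) ` (Y \<times> U1 A)"
definition lev :: "(nat \<Rightarrow> nat) set \<Rightarrow> nat \<Rightarrow> (nat \<Rightarrow> nat) set" where
  "lev S s = {x\<in>S. card (supp x) = s}"
definition levels :: "nat \<Rightarrow> (nat \<Rightarrow> nat) set \<Rightarrow> (nat \<Rightarrow> nat) set list" where
  "levels d S = map (lev S) [2..<Suc d]"
definition axpart :: "(nat \<Rightarrow> nat) set \<Rightarrow> (nat \<Rightarrow> nat) set" where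
  "axpart S = {x\<in>S. card (supp x) \<le> 1}"

lemma chain_map:
  "(\<forall>j. s \<le> j \<longrightarrow> Suc j < t \<longrightarrow> F (Suc j) \<subseteq> W (F j)) \<Longrightarrow> (s < t \<longrightarrow> F s \<subseteq> V) \<Longrightarrow> chainW W V (map F [s..<t])"
proof (induction "t - s" arbitrary: s V)
  case 0 then show ?case by simp
next
  case (Suc k)
  then have st: "s < t" by simp
  have e: "[s..<t] = s # [Suc s..<t]" using st by (simp add: upt_conv_Cons)
  have "chainW W (W (F s)) (map F [Suc s..<t])"
    using Suc.hyps(1)[of "Suc s" "W (F s)"] Suc.hyps(2) Suc.prems(1) by auto
  then show ?case unfolding e using Suc.prems(2) st by simp
qed

lemma supp_mono:
  assumes "x \<in> zplus d" "x' \<in> zplus d" "\<forall>i<d. x' i \<le> x i"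
  shows "supp x' \<subseteq> supp x"
proof
  fix i assume "i \<in> supp x'"
  then have "x' i \<noteq> 0" by (simp add: supp_def)
  then have "i < d" using zplus_le[OF assms(2), of i] by (cases "i < d") auto
  then show "i \<in> supp x" using assms(3) \<open>x' i \<noteq> 0\<close> by (auto simp: supp_def)
qed

lemma supp_ax: "c \<noteq> 0 \<Longrightarrow> supp (ax i c) = {i}"
  unfolding supp_def ax_def by auto

lemma axpart_lower: "lower_set d S \<Longrightarrow> lower_set d (axpart S)"
  unfolding lower_set_def axpart_def
proof (intro conjI ballI impI)
  assume l: "S \<subseteq> zplus d \<and> (\<forall>x\<in>S. \<forall>x'\<in>zplus d. (\<forall>i<d. x' i \<le> x i) \<longrightarrow> x' \<in> S)"
  show "{x \<in> S. card (supp x) \<le> 1} \<subseteq> zplus d" using l by auto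
  fix x x' assume x: "x \<in> {x \<in> S. card (supp x) \<le> 1}" and x': "x' \<in> zplus d" and le: "\<forall>i<d. x' i \<le> x i"
  have xz: "x \<in> zplus d" using x l by auto
  have "x' \<in> S" using l x x' le by auto
  moreover have "card (supp x') \<le> card (supp x)"
    by (rule card_mono[OF supp_finite[OF xz] supp_mono[OF xz x' le]])
  ultimately show "x' \<in> {x \<in> S. card (supp x) \<le> 1}" using x by auto
qed

lemma supp_z0: "supp z0 = {}" by (simp add: supp_def z0_def)

lemma ax_U1: "lower_set d S \<Longrightarrow> x \<in> S \<Longrightarrow> x i \<noteq> 0 \<Longrightarrow> ax i (x i) \<in> U1 (axpart S)"
proof -
  assume l: "lower_set d S" and x: "x \<in> S" and xi: "x i \<noteq> 0"
  have "ax i (x i) \<in> S" using ax_in[OF l x, of "x i" i] by simp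
  moreover have "card (supp (ax i (x i))) \<le> 1" using supp_ax[OF xi, of i] by simp
  moreover have "ax i (x i) \<noteq> z0" using ax_ne_z0[of "x i" i] xi by simp
  ultimately show ?thesis by (simp add: U1_def axpart_def)
qed

lemma lev2:
  assumes l: "lower_set d S" and x: "x \<in> S" and c2: "card (supp x) = 2"
  shows "x \<in> Vs (axpart S)"
proof -
  obtain i j where ij: "supp x = {i, j}" "i \<noteq> j" using c2 unfolding card_2_iff by blast
  have "i \<in> supp x" "j \<in> supp x" using ij(1) by simp_all
  then have xi: "x i \<noteq> 0" and xj: "x j \<noteq> 0" by (simp_all add: supp_def)
  let ?u = "ax i (x i)" and ?v = "ax j (x j)"
  have u: "?u \<in> U1 (axpart S)" using ax_U1[OF l x xi] .
  have v: "?v \<in> U1 (axpart S)" using ax_U1[OF l x xj] .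
  have uv: "?u \<noteq> ?v"
  proof
    assume "?u = ?v"
    then have "?u i = ?v i" by simp
    then show False using xi ij(2) by (simp add: ax_def)
  qed
  have P: "{?u, ?v} \<subseteq> U1 (axpart S) \<and> card {?u, ?v} = 2" using u v uv by simp
  have xeq: "x = (\<lambda>t. Max ((\<lambda>w. w t) ` {?u, ?v}))"
  proof (rule ext)
    fix t
    have im: "(\<lambda>w. w t) ` {?u, ?v} = {?u t, ?v t}" by simp
    show "x t = Max ((\<lambda>w. w t) ` {?u, ?v})"
    proof (cases "t = i")
      case True then show ?thesis unfolding im using ij(2) by (simp add: ax_def)
    next
      case ti: False
      show ?thesis
      proof (cases "t = j")
        case True then show ?thesis unfolding im using ti by (simp add: ax_def)
      next
        case False
        then have "t \<notin> supp x" using ti ij(1) by simp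
        then have "x t = 0" by (simp add: supp_def)
        then show ?thesis unfolding im using ti False by (simp add: ax_def)
      qed
    qed
  qed
  have "(\<lambda>t. Max ((\<lambda>w. w t) ` {?u, ?v})) \<in> Vs (axpart S)" unfolding Vs_def using P by blast
  then show ?thesis by (simp only: xeq[symmetric])
qed

lemma levS:
  assumes l: "lower_set d S" and x: "x \<in> S" and cs: "card (supp x) = Suc j" and j: "j \<ge> 2"
  shows "x \<in> Ws (axpart S) (lev S j)"
proof -
  have xz: "x \<in> zplus d" using lower_zplus[OF l x] .
  have "supp x \<noteq> {}" using cs by auto
  then obtain k where k: "k \<in> supp x" by auto
  then have xk: "x k \<noteq> 0" by (simp add: supp_def)
  let ?y = "x(k := 0)" and ?u = "ax k (x k)"
  have yz: "?y \<in> zplus d" using xz unfolding zplus_def by simp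
  have yS: "?y \<in> S" using lower_in[OF l x yz] by simp
  have "supp ?y = supp x - {k}" unfolding supp_def by auto
  then have "card (supp ?y) = j" using cs k supp_finite[OF xz] by simp
  then have y: "?y \<in> lev S j" using yS by (simp add: lev_def)
  have u: "?u \<in> U1 (axpart S)" using ax_U1[OF l x xk] .
  have xeq: "x = sup ?y ?u"
  proof (rule ext)
    fix t show "x t = sup ?y ?u t" by (cases "t = k") (simp_all add: ax_def sup_nat_def)
  qed
  have "sup ?y ?u \<in> Ws (axpart S) (lev S j)" unfolding Ws_def using y u by force
  then show ?thesis by (simp only: xeq[symmetric])
qed

lemma card_supp_le: "x \<in> zplus d \<Longrightarrow> card (supp x) \<le> d"
  using card_mono[OF finite_lessThan supp_sub, of x d] by simp

lemma decomp:
  assumes S: "S \<in> LS d n" and n: "n \<ge> 1"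
  shows "axpart S \<in> AX d (card (axpart S)) \<and> 1 \<le> card (axpart S) \<and> card (axpart S) \<le> n \<and>
         levels d S \<in> towers (Ws (axpart S)) (Vs (axpart S)) (d - 1) (n - card (axpart S)) \<and>
         S = axpart S \<union> \<Union>(set (levels d S))"
proof -
  have l: "lower_set d S" and fS: "finite S" and cS: "card S = n" using S by (auto simp: LS_def)
  let ?A = "axpart S"
  have sub: "?A \<subseteq> S" by (auto simp: axpart_def)
  have fA: "finite ?A" using finite_subset[OF sub fS] .
  have "S \<noteq> {}" using cS n by auto
  then have z: "z0 \<in> ?A" using z0_in[OF l] by (simp add: axpart_def supp_z0)
  have cA1: "1 \<le> card ?A" using z fA by (metis One_nat_def Suc_leI card_gt_0_iff empty_iff)
  have cAn: "card ?A \<le> n" using card_mono[OF fS sub] cS by simp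
  have AX: "?A \<in> AX d (card ?A)"
    unfolding AX_def using axpart_lower[OF l] fA by (auto simp: axpart_def)
  have U: "(\<Union>s\<in>{2..<Suc d}. lev S s) = S - ?A"
  proof
    show "(\<Union>s\<in>{2..<Suc d}. lev S s) \<subseteq> S - ?A" by (auto simp: lev_def axpart_def)
    show "S - ?A \<subseteq> (\<Union>s\<in>{2..<Suc d}. lev S s)"
    proof
      fix x assume x: "x \<in> S - ?A"
      then have "x \<in> S" "card (supp x) \<ge> 2" by (auto simp: axpart_def)
      moreover have "card (supp x) \<le> d" using card_supp_le[OF lower_zplus[OF l \<open>x \<in> S\<close>]] .
      ultimately show "x \<in> (\<Union>s\<in>{2..<Suc d}. lev S s)"
        by (intro UN_I[of "card (supp x)"]) (auto simp: lev_def)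
    qed
  qed
  have setlev: "\<Union>(set (levels d S)) = S - ?A" by (simp only: levels_def set_map set_upt U)
  have chain: "chainW (Ws ?A) (Vs ?A) (levels d S)"
    unfolding levels_def
  proof (rule chain_map)
    show "\<forall>j. 2 \<le> j \<longrightarrow> Suc j < Suc d \<longrightarrow> lev S (Suc j) \<subseteq> Ws ?A (lev S j)"
      using levS[OF l] by (auto simp: lev_def)
    show "2 < Suc d \<longrightarrow> lev S 2 \<subseteq> Vs ?A"
      using lev2[OF l] by (auto simp: lev_def)
  qed
  have fin: "\<forall>Y\<in>set (levels d S). finite Y" using fS by (auto simp: levels_def lev_def)
  have "sum_list (map card (levels d S)) = sum (\<lambda>s. card (lev S s)) {2..<Suc d}"
    unfolding levels_def map_map using sum_set_upt_conv_sum_list_nat[of "\<lambda>s. card (lev S s)" 2 "Suc d"]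
    by (simp only: comp_def set_upt)
  also have "\<dots> = card (\<Union>s\<in>{2..<Suc d}. lev S s)"
    by (rule card_UN_disjoint[symmetric]) (use fS in \<open>auto simp: lev_def\<close>)
  also have "\<dots> = n - card ?A" unfolding U using card_Diff_subset[OF fA sub] cS by simp
  finally have sm: "sum_list (map card (levels d S)) = n - card ?A" .
  have len: "length (levels d S) = d - 1" unfolding levels_def by (cases d) auto
  have tw: "levels d S \<in> towers (Ws ?A) (Vs ?A) (d - 1) (n - card ?A)"
    unfolding towers_def using len chain fin sm by simp
  have "S = ?A \<union> \<Union>(set (levels d S))" unfolding setlev using sub by blast
  then show ?thesis using AX cA1 cAn tw by blast
qed

lemma U1_card: "z0 \<in> A \<Longrightarrow> finite A \<Longrightarrow> card (U1 A) = card A - 1"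
  by (simp add: U1_def)

lemma Vs_card: "finite A \<Longrightarrow> finite (Vs A) \<and> card (Vs A) \<le> card (U1 A) choose 2"
proof -
  assume fA: "finite A"
  have fU: "finite (U1 A)" using fA by (simp add: U1_def)
  have f: "finite {P. P \<subseteq> U1 A \<and> card P = 2}" by (rule finite_subset[of _ "Pow (U1 A)"]) (use fU in auto)
  show ?thesis unfolding Vs_def using card_image_le[OF f] n_subsets[OF fU, of 2] f by auto
qed

lemma Ws_card: "finite A \<Longrightarrow> finite Y \<Longrightarrow> finite (Ws A Y) \<and> card (Ws A Y) \<le> card (U1 A) * card Y"
proof -
  assume fA: "finite A" and fY: "finite Y"
  have fU: "finite (U1 A)" using fA by (simp add: U1_def)
  have "card (Ws A Y) \<le> card (Y \<times> U1 A)" unfolding Ws_def by (rule card_image_le) (use fU fY in simp)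
  then have "card (Ws A Y) \<le> card (U1 A) * card Y" using fU fY by (simp add: card_cartesian_product mult.commute)
  then show ?thesis using fU fY by (simp add: Ws_def)
qed

lemma p_upper_nat:
  assumes n: "n \<ge> 1"
  shows "p d n \<le> (\<Sum>a\<in>{1..n}. ((a - 1 + d - 1) choose (a - 1)) * tb (a - 1) ((a - 1) choose 2) (n - a))"
proof -
  let ?Sig = "SIGMA a:{1..n}. SIGMA A:AX d a. towers (Ws A) (Vs A) (d - 1) (n - a)"
  let ?f = "\<lambda>(a::nat, A, ys). A \<union> \<Union>(set ys)"
  have tw: "finite (towers (Ws A) (Vs A) (d - 1) (n - a)) \<and>
            card (towers (Ws A) (Vs A) (d - 1) (n - a)) \<le> tb (a - 1) ((a - 1) choose 2) (n - a)"
    if a: "a \<in> {1..n}" and A: "A \<in> AX d a" for a A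
  proof -
    have l: "lower_set d A" and fA: "finite A" and cA: "card A = a" using A by (auto simp: AX_def)
    have "A \<noteq> {}" using cA a by auto
    then have z: "z0 \<in> A" using z0_in[OF l] by simp
    have cU: "card (U1 A) = a - 1" using U1_card[OF z fA] cA by simp
    have fV: "finite (Vs A)" and cV: "card (Vs A) \<le> (a - 1) choose 2" using Vs_card[OF fA] cU by auto
    have W: "finite (Ws A Y) \<and> card (Ws A Y) \<le> (a - 1) * card Y" if "finite Y" for Y
      using Ws_card[OF fA that] cU by simp
    from towers_card[OF fV W, of "d - 1" "n - a"] tb_mono[OF cV, of "a - 1" "n - a"]
    show ?thesis by linarith
  qed
  have finSig: "finite ?Sig"
    using AX_card tw by (intro finite_SigmaI) auto
  have "LS d n \<subseteq> ?f ` ?Sig"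
  proof
    fix S assume S: "S \<in> LS d n"
    note D = decomp[OF S n]
    show "S \<in> ?f ` ?Sig"
      by (rule image_eqI[of _ _ "(card (axpart S), axpart S, levels d S)"]) (use D in auto)
  qed
  then have "card (LS d n) \<le> card (?f ` ?Sig)" by (rule card_mono[OF finite_imageI[OF finSig]])
  also have "\<dots> \<le> card ?Sig" by (rule card_image_le[OF finSig])
  also have "\<dots> = (\<Sum>a\<in>{1..n}. card (SIGMA A:AX d a. towers (Ws A) (Vs A) (d - 1) (n - a)))"
    by (rule card_SigmaI) (use AX_card tw in \<open>auto intro!: finite_SigmaI\<close>)
  also have "\<dots> = (\<Sum>a\<in>{1..n}. \<Sum>A\<in>AX d a. card (towers (Ws A) (Vs A) (d - 1) (n - a)))"
    by (intro sum.cong refl card_SigmaI) (use AX_card tw in auto)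
  also have "\<dots> \<le> (\<Sum>a\<in>{1..n}. \<Sum>A\<in>AX d a. tb (a - 1) ((a - 1) choose 2) (n - a))"
    by (intro sum_mono) (use tw in auto)
  also have "\<dots> = (\<Sum>a\<in>{1..n}. ((a - 1 + d - 1) choose (a - 1)) * tb (a - 1) ((a - 1) choose 2) (n - a))"
    by (intro sum.cong refl) (use AX_card in auto)
  finally show ?thesis by (simp add: p_LS)
qed


lemma LS_finite: "finite (LS d n)"
proof -
  let ?B = "{x::nat\<Rightarrow>nat. \<forall>i. (d \<le> i \<longrightarrow> x i = 0) \<and> x i < n}"
  let ?g = "\<lambda>l i. if i < length l then l ! i else (0::nat)"
  have "?B \<subseteq> ?g ` {l. set l \<subseteq> {..<n} \<and> length l = d}"
  proof
    fix x assume x: "x \<in> ?B"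
    have "x = ?g (map x [0..<d])"
    proof (rule ext)
      fix i show "x i = ?g (map x [0..<d]) i" using x by (cases "i < d") auto
    qed
    moreover have "map x [0..<d] \<in> {l. set l \<subseteq> {..<n} \<and> length l = d}" using x by auto
    ultimately show "x \<in> ?g ` {l. set l \<subseteq> {..<n} \<and> length l = d}" by blast
  qed
  moreover have "finite (?g ` {l. set l \<subseteq> {..<n} \<and> length l = d})"
    by (intro finite_imageI finite_lists_length_eq) simp
  ultimately have fB: "finite ?B" by (rule finite_subset)
  have "LS d n \<subseteq> Pow ?B"
  proof
    fix S assume S: "S \<in> LS d n"
    have l: "lower_set d S" and fS: "finite S" and cS: "card S = n" using S by (auto simp: LS_def)
    have "S \<subseteq> ?B"
    proof
      fix x assume x: "x \<in> S"
      have xz: "x \<in> zplus d" using lower_zplus[OF l x] .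
      have "x i < n" for i
      proof -
        have inj: "inj_on (ax i) {0..x i}"
        proof (rule inj_onI)
          fix c c' assume "ax i c = ax i c'"
          then have "ax i c i = ax i c' i" by simp
          then show "c = c'" by (simp add: ax_def)
        qed
        have "ax i ` {0..x i} \<subseteq> S" using ax_in[OF l x] by auto
        then have "card (ax i ` {0..x i}) \<le> n" using card_mono[OF fS] cS by metis
        then show ?thesis using card_image[OF inj] by simp
      qed
      then show "x \<in> ?B" using zplus_le[OF xz] by auto
    qed
    then show "S \<in> Pow ?B" by simp
  qed
  then show ?thesis using fB by (meson finite_Pow_iff finite_subset)
qed

lemma p_lower_axis:
  assumes n: "n \<ge> 1"
  shows "(n - 1 + d - 1) choose (n - 1) \<le> p d n"
proof -
  have "AX d n \<subseteq> LS d n" by (auto simp: AX_def LS_def)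
  then have "card (AX d n) \<le> card (LS d n)" by (rule card_mono[OF LS_finite])
  then show ?thesis using AX_card[OF n, of d] by (simp add: p_LS)
qed

definition chi :: "nat set \<Rightarrow> nat \<Rightarrow> nat" where "chi Q = (\<lambda>t. if t \<in> Q then 1 else 0)"

lemma chi_inj: "chi P = chi Q \<Longrightarrow> P = Q"
proof
  assume e: "chi P = chi Q"
  show "P \<subseteq> Q"
  proof
    fix t assume "t \<in> P"
    then have "chi P t = 1" by (simp add: chi_def)
    then have "chi Q t = 1" using e by simp
    then show "t \<in> Q" by (simp add: chi_def split: if_splits)
  qed
  show "Q \<subseteq> P"
  proof
    fix t assume "t \<in> Q"
    then have "chi Q t = 1" by (simp add: chi_def)
    then have "chi P t = 1" using e by simp
    then show "t \<in> P" by (simp add: chi_def split: if_splits)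
  qed
qed

definition Fam :: "nat \<Rightarrow> nat set set \<Rightarrow> nat set set" where
  "Fam K E = insert {} ((\<lambda>i. {i}) ` {..<K}) \<union> E"

definition Pairs :: "nat \<Rightarrow> nat set set" where "Pairs K = {P. P \<subseteq> {..<K} \<and> card P = 2}"

lemma G_lower:
  assumes K: "K \<le> d" and E: "E \<subseteq> Pairs K"
  shows "lower_set d (chi ` Fam K E)"
  unfolding lower_set_def
proof (intro conjI ballI impI)
  have sub: "Q \<subseteq> {..<K}" if "Q \<in> Fam K E" for Q using that E by (auto simp: Fam_def Pairs_def)
  show "chi ` Fam K E \<subseteq> zplus d"
  proof
    fix x assume "x \<in> chi ` Fam K E"
    then obtain Q where Q: "Q \<in> Fam K E" "x = chi Q" by auto
    show "x \<in> zplus d" unfolding zplus_def using sub[OF Q(1)] K Q(2) by (auto simp: chi_def)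
  qed
  fix x x' assume x: "x \<in> chi ` Fam K E" and x': "x' \<in> zplus d" and le: "\<forall>i<d. x' i \<le> x i"
  obtain Q where Q: "Q \<in> Fam K E" "x = chi Q" using x by auto
  have le2: "x' t \<le> chi Q t" for t
  proof (cases "t < d")
    case True then show ?thesis using le Q(2) by simp
  next
    case False then show ?thesis using zplus_le[OF x'] by simp
  qed
  let ?R = "{t. x' t \<noteq> 0}"
  have x'eq: "x' = chi ?R"
  proof (rule ext)
    fix t show "x' t = chi ?R t" using le2[of t] by (cases "t \<in> Q") (auto simp: chi_def)
  qed
  have RQ: "?R \<subseteq> Q"
  proof
    fix t assume "t \<in> ?R"
    then have "x' t \<noteq> 0" by simp
    then show "t \<in> Q" using le2[of t] by (cases "t \<in> Q") (auto simp: chi_def)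
  qed
  have "?R \<in> Fam K E"
  proof (cases "?R = {}")
    case True then show ?thesis by (simp add: Fam_def)
  next
    case Rne: False
    then obtain r where r: "r \<in> ?R" by blast
    show ?thesis
    proof (cases "Q \<in> E")
      case True
      then have fQ: "finite Q" "card Q = 2" using E by (auto simp: Pairs_def intro: finite_subset)
      show ?thesis
      proof (cases "?R = Q")
        case True then show ?thesis using \<open>Q \<in> E\<close> by (simp add: Fam_def)
      next
        case False
        then have "card ?R < 2" using psubset_card_mono[OF fQ(1)] RQ fQ(2) by auto
        moreover have "card ?R \<noteq> 0" using Rne finite_subset[OF RQ fQ(1)] by simp
        ultimately have "card ?R = 1" by linarith
        then obtain i where i: "?R = {i}" by (rule card_1_singletonE)
        then have "i \<in> Q" using RQ by auto
        then have "i < K" using E True by (auto simp: Pairs_def)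
        then show ?thesis using i by (simp add: Fam_def)
      qed
    next
      case False
      then have "Q \<in> insert {} ((\<lambda>i. {i}) ` {..<K})" using Q(1) by (simp add: Fam_def)
      then have "?R \<in> insert {} ((\<lambda>i. {i}) ` {..<K})" using RQ Rne by auto
      then show ?thesis unfolding Fam_def by blast
    qed
  qed
  then show "x' \<in> chi ` Fam K E" using x'eq by blast
qed

lemma p_lower_graph:
  assumes K: "K \<le> d" and Kn: "K + 1 \<le> n"
  shows "(K choose 2) choose (n - 1 - K) \<le> p d n"
proof -
  let ?Es = "{E. E \<subseteq> Pairs K \<and> card E = n - 1 - K}"
  have fP: "finite (Pairs K)" by (rule finite_subset[of _ "Pow {..<K}"]) (auto simp: Pairs_def)
  have cP: "card (Pairs K) = K choose 2" unfolding Pairs_def using n_subsets[of "{..<K}" 2] by simp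
  have cEs: "card ?Es = (K choose 2) choose (n - 1 - K)" using n_subsets[OF fP, of "n - 1 - K"] cP by simp
  have chi_inj_on: "inj_on chi X" for X by (rule inj_onI) (rule chi_inj)
  have inG: "chi ` Fam K E \<in> LS d n" if E: "E \<in> ?Es" for E
  proof -
    have EP: "E \<subseteq> Pairs K" and cE: "card E = n - 1 - K" using E by auto
    have fE: "finite E" using finite_subset[OF EP fP] .
    have d1: "{} \<notin> (\<lambda>i. {i}) ` {..<K} \<union> E" using EP by (auto simp: Pairs_def)
    have d2: "(\<lambda>i. {i}) ` {..<K} \<inter> E = {}" using EP by (auto simp: Pairs_def)
    have cS: "card ((\<lambda>i. {i}) ` {..<K}) = K" by (subst card_image) (auto intro: inj_onI)
    have "card (Fam K E) = 1 + (K + card E)"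
      unfolding Fam_def using d1 d2 cS fE by (simp add: card_Un_disjoint)
    then have c: "card (chi ` Fam K E) = n" using card_image[OF chi_inj_on] cE Kn by simp
    have f: "finite (chi ` Fam K E)" using fE by (simp add: Fam_def)
    show ?thesis using G_lower[OF K EP] c f by (simp add: LS_def)
  qed
  have inj: "inj_on (\<lambda>E. chi ` Fam K E) ?Es"
  proof (rule inj_onI)
    fix E E' assume E: "E \<in> ?Es" and E': "E' \<in> ?Es" and eq: "chi ` Fam K E = chi ` Fam K E'"
    have "Fam K E = Fam K E'" using eq chi_inj_on by (metis inj_on_image_eq_iff subset_UNIV)
    have key: "X = {P \<in> Fam K X. card P = 2}" if "X \<in> ?Es" for X
      using that by (auto simp: Fam_def Pairs_def)
    show "E = E'" using key[OF E] key[OF E'] \<open>Fam K E = Fam K E'\<close> by simp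
  qed
  have "card ?Es \<le> card (LS d n)"
    using card_inj_on_le[OF inj _ LS_finite] inG by blast
  then show ?thesis using cEs by (simp add: p_LS)
qed


definition fB :: "nat \<Rightarrow> nat \<Rightarrow> nat" where "fB D k = (k + D - 1) choose k"

definition phi :: "nat \<Rightarrow> nat \<Rightarrow> real" where
  "phi n m = (if m = 0 then 1 else 2^(m-1) * (real n ^ 2 / 2)^m / fact m)"

lemma fB_Suc: "D \<ge> 1 \<Longrightarrow> fB D (Suc k) * Suc k = (k + D) * fB D k"
proof -
  assume D: "D \<ge> 1"
  have "Suc (k + D - 1) * ((k + D - 1) choose k) = (Suc (k + D - 1) choose Suc k) * Suc k"
    by (rule Suc_times_binomial_eq)
  moreover have "Suc (k + D - 1) = k + D" "Suc k + D - 1 = Suc (k + D - 1)" using D by auto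
  ultimately show ?thesis unfolding fB_def by (metis mult.commute)
qed

lemma fB_bounds: "D \<ge> 1 \<Longrightarrow> D^k \<le> fB D k * fact k \<and> fB D k * fact k \<le> (D + k)^k"
proof (induction k)
  case 0 then show ?case by (simp add: fB_def)
next
  case (Suc k)
  have "fB D (Suc k) * fact (Suc k) = (fB D (Suc k) * Suc k) * fact k" by (simp add: algebra_simps)
  then have e: "fB D (Suc k) * fact (Suc k) = (k + D) * (fB D k * fact k)"
    using fB_Suc[OF Suc.prems, of k] by simp
  have "D^(Suc k) = D * D^k" by simp
  also have "\<dots> \<le> (k + D) * (fB D k * fact k)" using Suc by (intro mult_le_mono) auto
  finally have l: "D^(Suc k) \<le> fB D (Suc k) * fact (Suc k)" using e by simp
  have "(k + D) * (fB D k * fact k) \<le> (D + Suc k) * (D + k)^k" using Suc by (intro mult_le_mono) auto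
  also have "\<dots> \<le> (D + Suc k) * (D + Suc k)^k" by (intro mult_le_mono power_mono) auto
  finally have u: "fB D (Suc k) * fact (Suc k) \<le> (D + Suc k)^(Suc k)" using e by simp
  show ?case using l u by simp
qed

lemma fB_pos: "D \<ge> 1 \<Longrightarrow> fB D k \<ge> 1"
  using fB_bounds[of D k] by (metis One_nat_def Suc_le_eq less_one mult_is_0 neq0_conv not_le one_le_power zero_less_iff_neq_zero)

lemma fB_ratio: "D \<ge> 1 \<Longrightarrow> Suc k \<le> N \<Longrightarrow> real (fB D k) \<le> real (fB D (Suc k)) * (real N / real D)"
proof -
  assume D: "D \<ge> 1" and k: "Suc k \<le> N"
  have "fB D k * D \<le> fB D k * (k + D)" by simp
  also have "\<dots> = fB D (Suc k) * Suc k" using fB_Suc[OF D, of k] by simp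
  also have "\<dots> \<le> fB D (Suc k) * N" using k by (intro mult_le_mono) auto
  finally have "real (fB D k) * real D \<le> real (fB D (Suc k)) * real N" by (metis of_nat_le_iff of_nat_mult)
  then show ?thesis using D by (simp add: field_simps)
qed

lemma fB_shift: "D \<ge> 1 \<Longrightarrow> m \<le> N \<Longrightarrow> real (fB D (N - m)) \<le> real (fB D N) * (real N / real D)^m"
proof (induction m)
  case 0 then show ?case by simp
next
  case (Suc m)
  have "real (fB D (N - Suc m)) \<le> real (fB D (Suc (N - Suc m))) * (real N / real D)"
    using fB_ratio[OF Suc.prems(1)] Suc.prems(2) by simp
  also have "Suc (N - Suc m) = N - m" using Suc.prems(2) by simp
  also have "real (fB D (N - m)) * (real N / real D) \<le> real (fB D N) * (real N / real D)^m * (real N / real D)"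
    using Suc by (intro mult_right_mono) auto
  finally show ?case by (simp add: algebra_simps)
qed

lemma fB_mono: "d \<le> D \<Longrightarrow> fB d k \<le> fB D k"
  unfolding fB_def by (rule choose_mono_top) simp

lemma tb_phi:
  assumes a: "a \<ge> 1"
  shows "real (tb (a - 1) ((a - 1) choose 2) m) \<le> phi (a + m) m"
proof (cases "m = 0")
  case True then show ?thesis by (simp add: tb_def phi_def)
next
  case m: False
  let ?N = "(a - 1) choose 2" and ?M = "((a - 1) choose 2) + (a - 1) * m"
  have t: "tb (a - 1) ?N m \<le> 2^(m-1) * (?M choose m)" using m unfolding tb_def by (simp only: if_False) (auto simp: algebra_simps)
  have "2 * ?N \<le> (a - 1) * (a - 1 - 1)" unfolding choose_two by simp
  also have "\<dots> \<le> a * a" by (intro mult_le_mono) auto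
  finally have "2 * ?M \<le> a * a + 2 * (a * m)" by (simp add: algebra_simps)
  also have "\<dots> \<le> (a + m)^2" by (simp add: power2_eq_square algebra_simps)
  finally have M2n: "2 * ?M \<le> (a + m)^2" .
  have M2: "2 * real ?M \<le> real (a + m) ^ 2"
    using M2n of_nat_le_iff[of "2 * ?M" "(a + m)^2"] by simp
  have "real (?M choose m) * fact m \<le> real ?M ^ m"
  proof -
    have "(?M choose m) * fact m \<le> ?M ^ m" by (rule binomial_fact_pow)
    then have "real ((?M choose m) * fact m) \<le> real (?M ^ m)" by (simp only: of_nat_le_iff)
    then show ?thesis by simp
  qed
  then have b: "real (?M choose m) \<le> real ?M ^ m / fact m" by (simp add: field_simps)
  have "real ?M ^ m \<le> (real (a + m) ^ 2 / 2) ^ m" using M2 by (intro power_mono) auto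
  then have c: "real (?M choose m) \<le> (real (a + m) ^ 2 / 2) ^ m / fact m"
    using b by (meson divide_right_mono fact_ge_zero order_trans)
  have tr: "real (tb (a - 1) ?N m) \<le> 2^(m-1) * real (?M choose m)"
  proof -
    have "real (tb (a - 1) ?N m) \<le> real (2^(m-1) * (?M choose m))" using t by (simp only: of_nat_le_iff)
    then show ?thesis by simp
  qed
  have "real (tb (a - 1) ?N m) \<le> 2^(m-1) * ((real (a + m) ^ 2 / 2) ^ m / fact m)"
    using tr c by (meson mult_left_mono order_trans zero_le_numeral zero_le_power)
  then show ?thesis using m by (simp add: phi_def)
qed

lemma p_upper_real:
  assumes n: "n \<ge> 1" and d: "d \<ge> 1" and dD: "d \<le> D"
  shows "real (p d n) \<le> real (fB D (n - 1)) * (\<Sum>m<n. (real (n - 1) / real D)^m * phi n m)"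
proof -
  have D: "D \<ge> 1" using d dD by simp
  have "real (p d n) \<le> real (\<Sum>a\<in>{1..n}. ((a - 1 + d - 1) choose (a - 1)) * tb (a - 1) ((a - 1) choose 2) (n - a))"
    using p_upper_nat[OF n, of d] by (simp only: of_nat_le_iff)
  also have "\<dots> = (\<Sum>a\<in>{1..n}. real (fB d (a - 1)) * real (tb (a - 1) ((a - 1) choose 2) (n - a)))"
    by (simp only: of_nat_sum of_nat_mult fB_def)
  also have "\<dots> = (\<Sum>m<n. real (fB d (n - m - 1)) * real (tb (n - m - 1) ((n - m - 1) choose 2) m))"
  proof (rule sum.reindex_bij_witness[of _ "\<lambda>m. n - m" "\<lambda>a. n - a"])
    fix a assume a: "a \<in> {1..n}"
    then have e: "n - (n - a) - 1 = a - 1" by auto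
    show "real (fB d (n - (n - a) - 1)) * real (tb (n - (n - a) - 1) ((n - (n - a) - 1) choose 2) (n - a))
          = real (fB d (a - 1)) * real (tb (a - 1) ((a - 1) choose 2) (n - a))" unfolding e ..
  qed auto
  also have "\<dots> \<le> (\<Sum>m<n. (real (fB D (n - 1)) * (real (n - 1) / real D)^m) * phi n m)"
  proof (rule sum_mono)
    fix m assume m: "m \<in> {..<n}"
    have e: "n - m - 1 = n - 1 - m" by simp
    have "real (fB d (n - m - 1)) \<le> real (fB D (n - 1 - m))"
      unfolding e using fB_mono[OF dD, of "n - 1 - m"] by (simp only: of_nat_le_iff)
    also have "\<dots> \<le> real (fB D (n - 1)) * (real (n - 1) / real D)^m"
      using fB_shift[OF D, of m "n - 1"] m by simp
    finally have A: "real (fB d (n - m - 1)) \<le> real (fB D (n - 1)) * (real (n - 1) / real D)^m" .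
    have e2: "n - m + m = n" using m by auto
    have B: "real (tb (n - m - 1) ((n - m - 1) choose 2) m) \<le> phi n m"
      using tb_phi[of "n - m" m] m unfolding e2 by simp
    show "real (fB d (n - m - 1)) * real (tb (n - m - 1) ((n - m - 1) choose 2) m)
        \<le> real (fB D (n - 1)) * (real (n - 1) / real D)^m * phi n m"
      using A B by (intro mult_mono) (auto simp: phi_def)
  qed
  also have "\<dots> = real (fB D (n - 1)) * (\<Sum>m<n. (real (n - 1) / real D)^m * phi n m)"
    by (simp only: sum_distrib_left mult.assoc)
  finally show ?thesis .
qed

lemma two_pow_le_fact0: "(2::real)^m \<le> 2 * fact m"
proof (induction m)
  case 0 then show ?case by simp
next
  case (Suc m)
  show ?case
  proof (cases "m = 0")
    case True then show ?thesis by simp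
  next
    case False
    have "(2::real)^(Suc m) = 2 * 2^m" by simp
    also have "\<dots> \<le> 2 * (2 * fact m)" using Suc.IH by simp
    also have "\<dots> \<le> 2 * (real (Suc m) * fact m)" using False by (intro mult_left_mono mult_right_mono) auto
    finally show ?thesis by simp
  qed
qed

lemma two_pow_le_fact: "m \<ge> 1 \<Longrightarrow> (2::real)^(m-1) \<le> fact m"
proof -
  assume m: "m \<ge> 1"
  have "(2::real)^m = 2 * 2^(m-1)" using m by (cases m) auto
  then show ?thesis using two_pow_le_fact0[of m] by simp
qed

lemma phi_le1: "phi n m \<le> (real n ^ 2 / 2)^m"
proof (cases "m = 0")
  case True then show ?thesis by (simp add: phi_def)
next
  case False
  have "2^(m-1) * (real n ^ 2 / 2)^m / fact m \<le> fact m * (real n ^ 2 / 2)^m / fact m"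
    using two_pow_le_fact[of m] False by (intro divide_right_mono mult_right_mono) auto
  then show ?thesis using False by (simp add: phi_def)
qed

lemma phi_le2: "phi n m \<le> (real n ^ 2)^m / fact m"
proof (cases "m = 0")
  case True then show ?thesis by (simp add: phi_def)
next
  case False
  have "2^(m-1) * (real n ^ 2 / 2)^m = (real n ^ 2)^m * (2^(m-1) / 2^m)"
    by (simp add: power_divide)
  also have "\<dots> \<le> (real n ^ 2)^m * 1"
    using False by (intro mult_left_mono) auto
  finally show ?thesis using False by (simp add: phi_def divide_right_mono)
qed

lemma exp_partial: "(x::real) \<ge> 0 \<Longrightarrow> (\<Sum>m<N. x^m / fact m) \<le> exp x"
proof -
  assume x: "x \<ge> 0"
  have s: "(\<lambda>m. x^m /\<^sub>R fact m) sums exp x" by (rule exp_converges)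
  have "(\<Sum>m<N. x^m /\<^sub>R fact m) \<le> suminf (\<lambda>m. x^m /\<^sub>R fact m)"
    by (rule sum_le_suminf) (use s x in \<open>auto simp: sums_iff\<close>)
  then show ?thesis using s by (simp add: sums_iff divide_inverse mult.commute)
qed

lemma p_upper_a:
  assumes n: "n \<ge> 1" and d: "d \<ge> 1"
  shows "real (p d n) \<le> real (fB d (n - 1)) * (\<Sum>m<n. (real n ^ 3 / (2 * real d))^m)"
proof -
  have "real (p d n) \<le> real (fB d (n - 1)) * (\<Sum>m<n. (real (n - 1) / real d)^m * phi n m)"
    using p_upper_real[OF n d order_refl] .
  also have "(\<Sum>m<n. (real (n - 1) / real d)^m * phi n m) \<le> (\<Sum>m<n. (real n ^ 3 / (2 * real d))^m)"
  proof (rule sum_mono)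
    fix m
    have "(real (n - 1) / real d)^m * phi n m \<le> (real n / real d)^m * (real n ^ 2 / 2)^m"
      using phi_le1[of n m] by (intro mult_mono power_mono) (auto simp: phi_def divide_right_mono)
    also have "\<dots> = (real n / real d * (real n ^ 2 / 2))^m" by (simp only: power_mult_distrib)
    also have "real n / real d * (real n ^ 2 / 2) = real n ^ 3 / (2 * real d)"
      by (simp add: field_simps power2_eq_square power3_eq_cube)
    finally show "(real (n - 1) / real d)^m * phi n m \<le> (real n ^ 3 / (2 * real d))^m" .
  qed
  then have "real (fB d (n - 1)) * (\<Sum>m<n. (real (n - 1) / real d)^m * phi n m)
     \<le> real (fB d (n - 1)) * (\<Sum>m<n. (real n ^ 3 / (2 * real d))^m)"
    by (intro mult_left_mono) auto
  finally show ?thesis .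
qed

lemma p_upper_exp:
  assumes n: "n \<ge> 1" and d: "d \<ge> 1" and dD: "d \<le> D"
  shows "real (p d n) \<le> real (fB D (n - 1)) * exp (real n ^ 3 / real D)"
proof -
  have D: "D \<ge> 1" using d dD by simp
  have "real (p d n) \<le> real (fB D (n - 1)) * (\<Sum>m<n. (real (n - 1) / real D)^m * phi n m)"
    using p_upper_real[OF n d dD] .
  also have "(\<Sum>m<n. (real (n - 1) / real D)^m * phi n m) \<le> (\<Sum>m<n. (real n ^ 3 / real D)^m / fact m)"
  proof (rule sum_mono)
    fix m
    have "(real (n - 1) / real D)^m * phi n m \<le> (real n / real D)^m * ((real n ^ 2)^m / fact m)"
      using phi_le2[of n m] by (intro mult_mono power_mono) (auto simp: phi_def divide_right_mono)
    also have "\<dots> = (real n / real D * real n ^ 2)^m / fact m" by (simp only: power_mult_distrib times_divide_eq_right)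
    also have "real n / real D * real n ^ 2 = real n ^ 3 / real D"
      by (simp add: field_simps power2_eq_square power3_eq_cube)
    finally show "(real (n - 1) / real D)^m * phi n m \<le> (real n ^ 3 / real D)^m / fact m" .
  qed
  also have "\<dots> \<le> exp (real n ^ 3 / real D)" by (rule exp_partial) simp
  finally show ?thesis by (simp add: mult_left_mono)
qed

lemma p_lower_fB: "n \<ge> 1 \<Longrightarrow> real (fB d (n - 1)) \<le> real (p d n)"
  using p_lower_axis[of n d] by (simp add: fB_def)


lemma pow_div_fact_le_exp: "(x::real) \<ge> 0 \<Longrightarrow> x^k / fact k \<le> exp x"
proof -
  assume x: "x \<ge> 0"
  have "x^k / fact k \<le> (\<Sum>m<Suc k. x^m / fact m)"
    by (rule member_le_sum) (use x in auto)
  also have "\<dots> \<le> exp x" by (rule exp_partial[OF x])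
  finally show ?thesis .
qed

lemma ln_fact_lower: "k \<ge> 1 \<Longrightarrow> real k * ln (real k) - real k \<le> ln (fact k)"
proof -
  assume k: "k \<ge> 1"
  have "real k ^ k / fact k \<le> exp (real k)" by (rule pow_div_fact_le_exp) simp
  then have "real k ^ k \<le> exp (real k) * fact k" by (simp add: field_simps)
  then have "ln (real k ^ k) \<le> ln (exp (real k) * fact k)"
    using k by (intro ln_mono) auto
  also have "\<dots> = real k + ln (fact k)" by (simp add: ln_mult)
  finally show ?thesis using k by (simp add: ln_realpow)
qed

lemma e_le_pow: "k \<ge> 1 \<Longrightarrow> exp 1 \<le> ((real k + 1) / real k) ^ (k + 1)"
proof -
  assume k: "k \<ge> 1"
  have pos: "real k / (real k + 1) > 0" using k by simp
  have "ln (real k / (real k + 1)) \<le> real k / (real k + 1) - 1" by (rule ln_le_minus_one[OF pos])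
  also have "\<dots> = - 1 / (real k + 1)" by (simp add: field_simps)
  finally have "ln ((real k + 1) / real k) \<ge> 1 / (real k + 1)"
    using k by (simp add: ln_div)
  then have "(real k + 1) * ln ((real k + 1) / real k) \<ge> 1" by (simp add: field_simps)
  moreover have "ln (((real k + 1) / real k) ^ (k + 1)) = real (k + 1) * ln ((real k + 1) / real k)"
    by (rule ln_realpow)
  moreover have "real (k + 1) * ln ((real k + 1) / real k) = (real k + 1) * ln ((real k + 1) / real k)" by simp
  ultimately have "ln (((real k + 1) / real k) ^ (k + 1)) \<ge> 1" by linarith
  then have "exp 1 \<le> exp (ln (((real k + 1) / real k) ^ (k + 1)))" by simp
  also have "\<dots> = ((real k + 1) / real k) ^ (k + 1)" using k by simp
  finally show ?thesis .
qed

lemma fact_upper: "k \<ge> 1 \<Longrightarrow> fact k \<le> exp 1 * real k ^ (k + 1) / exp (real k)"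
proof (induction k rule: dec_induct)
  case base then show ?case by simp
next
  case (step k)
  have k: "k \<ge> 1" using step.hyps by simp
  have "fact (Suc k) = (real k + 1) * fact k" by simp
  also have "\<dots> \<le> (real k + 1) * (exp 1 * real k ^ (k + 1) / exp (real k))"
    using step.IH by (intro mult_left_mono) auto
  also have "\<dots> \<le> exp 1 * real (Suc k) ^ (Suc k + 1) / exp (real (Suc k))"
  proof -
    have "real k ^ (k + 1) * exp 1 \<le> real k ^ (k + 1) * ((real k + 1) / real k) ^ (k + 1)"
      by (rule mult_left_mono[OF e_le_pow[OF k]]) simp
    then have e: "exp 1 * real k ^ (k + 1) \<le> real k ^ (k + 1) * ((real k + 1) / real k) ^ (k + 1)"
      by (simp only: mult.commute)
    also have "\<dots> = (real k + 1) ^ (k + 1)" using k by (simp add: power_mult_distrib[symmetric])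
    finally have e2: "exp 1 * real k ^ (k + 1) \<le> (real k + 1) ^ (k + 1)" .
    have "(real k + 1) * (exp 1 * real k ^ (k + 1) / exp (real k))
        = (real k + 1) * (exp 1 * real k ^ (k + 1)) / exp (real k)" by simp
    also have "\<dots> \<le> (real k + 1) * (real k + 1) ^ (k + 1) / exp (real k)"
      using e2 by (intro divide_right_mono mult_left_mono) auto
    also have "\<dots> = exp 1 * (real k + 1) ^ (k + 2) / exp (real k + 1)"
      by (simp add: exp_add field_simps)
    finally show ?thesis by (simp add: add_ac)
  qed
  finally show ?case .
qed

lemma ln_fact_upper: "k \<ge> 1 \<Longrightarrow> ln (fact k) \<le> 1 + (real k + 1) * ln (real k) - real k"
proof -
  assume k: "k \<ge> 1"
  have "ln (fact k) \<le> ln (exp 1 * real k ^ (k + 1) / exp (real k))"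
    using fact_upper[OF k] k by (intro ln_mono) auto
  also have "\<dots> = 1 + (real k + 1) * ln (real k) - real k"
    using k by (simp add: ln_div ln_mult ln_realpow algebra_simps)
  finally show ?thesis .
qed

lemma ln_fB_lower:
  assumes D: "D \<ge> 1" and k: "k \<ge> 1"
  shows "real k * ln (real D) - 1 - (real k + 1) * ln (real k) + real k \<le> ln (real (fB D k))"
proof -
  have "D^k \<le> fB D k * fact k" using fB_bounds[OF D] by simp
  then have a: "real D ^ k \<le> real (fB D k) * fact k"
    by (metis of_nat_fact of_nat_le_iff of_nat_mult of_nat_power)
  have fpos: "real (fB D k) > 0" using fB_pos[OF D, of k] by simp
  have "ln (real D ^ k) \<le> ln (real (fB D k) * fact k)" using a D by (intro ln_mono) auto
  also have "\<dots> = ln (real (fB D k)) + ln (fact k)" using fpos by (simp add: ln_mult)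
  finally have "real k * ln (real D) \<le> ln (real (fB D k)) + ln (fact k)" using D by (simp add: ln_realpow)
  then show ?thesis using ln_fact_upper[OF k] by linarith
qed

lemma ln_fB_upper:
  assumes D: "D \<ge> 1" and k: "k \<ge> 1"
  shows "ln (real (fB D k)) \<le> real k * ln (real D + real k) - real k * ln (real k) + real k"
proof -
  have "fB D k * fact k \<le> (D + k)^k" using fB_bounds[OF D] by simp
  then have a: "real (fB D k) * fact k \<le> (real D + real k) ^ k"
    by (metis of_nat_add of_nat_fact of_nat_le_iff of_nat_mult of_nat_power)
  have fpos: "real (fB D k) > 0" using fB_pos[OF D, of k] by simp
  have "ln (real (fB D k) * fact k) \<le> ln ((real D + real k) ^ k)" using a fpos by (intro ln_mono) auto
  then have "ln (real (fB D k)) + ln (fact k) \<le> real k * ln (real D + real k)"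
    using fpos D by (simp add: ln_mult ln_realpow)
  then show ?thesis using ln_fact_lower[OF k] by linarith
qed

lemma p_pos: "n \<ge> 1 \<Longrightarrow> d \<ge> 1 \<Longrightarrow> real (p d n) \<ge> 1"
  using p_lower_fB[of n d] fB_pos[of d "n - 1"] by linarith

lemma ln_p_lower:
  assumes n: "n \<ge> 2" and d: "d \<ge> 1"
  shows "real (n - 1) * ln (real d) - 1 - real n * ln (real (n - 1)) + real (n - 1) \<le> ln (real (p d n))"
proof -
  have k: "n - 1 \<ge> 1" using n by simp
  have e: "real (n - 1) + 1 = real n" using n by simp
  have "ln (real (fB d (n - 1))) \<le> ln (real (p d n))"
    using p_lower_fB[of n d] fB_pos[OF d, of "n - 1"] n by (intro ln_mono) auto
  then show ?thesis using ln_fB_lower[OF d k] unfolding e by linarith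
qed

lemma ln_p_upper:
  assumes n: "n \<ge> 2" and d: "d \<ge> 1" and dD: "d \<le> D"
  shows "ln (real (p d n)) \<le> real (n - 1) * ln (real D + real (n - 1)) - real (n - 1) * ln (real (n - 1)) + real (n - 1) + real n ^ 3 / real D"
proof -
  have D: "D \<ge> 1" using d dD by simp
  have k: "n - 1 \<ge> 1" using n by simp
  have fpos: "real (fB D (n - 1)) > 0" using fB_pos[OF D, of "n - 1"] by simp
  have "ln (real (p d n)) \<le> ln (real (fB D (n - 1)) * exp (real n ^ 3 / real D))"
    using p_upper_exp[of n d D] p_pos[of n d] n d dD by (intro ln_mono) auto
  also have "\<dots> = ln (real (fB D (n - 1))) + real n ^ 3 / real D" using fpos by (simp add: ln_mult)
  finally show ?thesis using ln_fB_upper[OF D k] by linarith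
qed

lemma part_a:
  assumes n: "n \<ge> 1" and d: "d \<ge> 1" and big: "real d > real n ^ 3 / 2"
  shows "1 \<le> real (p d n) / real ((d + n - 2) choose (d - 1)) \<and>
         real (p d n) / real ((d + n - 2) choose (d - 1)) < 1 / (1 - real n ^ 3 / (2 * real d))"
proof -
  have eqB: "(d + n - 2) choose (d - 1) = fB d (n - 1)"
  proof -
    have "d + n - 2 = n - 1 + d - 1" using n d by simp
    moreover have "(n - 1 + d - 1) choose (n - 1) = (n - 1 + d - 1) choose (n - 1 + d - 1 - (n - 1))"
      by (rule binomial_symmetric) (use d in simp)
    moreover have "n - 1 + d - 1 - (n - 1) = d - 1" using n d by simp
    ultimately show ?thesis unfolding fB_def by simp
  qed
  have Bpos: "real (fB d (n - 1)) > 0" using fB_pos[OF d, of "n - 1"] by simp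
  let ?r = "real n ^ 3 / (2 * real d)"
  have r0: "?r > 0" using n d by simp
  have r1: "?r < 1" using big d by (simp add: divide_less_eq)
  have lo: "1 \<le> real (p d n) / real (fB d (n - 1))"
    using p_lower_fB[OF n, of d] Bpos by simp
  have ne: "(?r = 1) = False" using r1 by (metis less_irrefl)
  have "(\<Sum>m<n. ?r^m) = (1 - ?r^n) / (1 - ?r)"
    unfolding sum_gp_strict ne if_False ..
  also have "\<dots> < 1 / (1 - ?r)"
    using r0 r1 by (intro divide_strict_right_mono) auto
  finally have s: "(\<Sum>m<n. ?r^m) < 1 / (1 - ?r)" .
  have "real (p d n) / real (fB d (n - 1)) \<le> (\<Sum>m<n. ?r^m)"
    using p_upper_a[OF n d] Bpos by (simp add: field_simps)
  then have up: "real (p d n) / real (fB d (n - 1)) < 1 / (1 - ?r)" using s by linarith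
  show ?thesis unfolding eqB using lo up by simp
qed


lemma ln_diff_le: "0 < (a::real) \<Longrightarrow> a \<le> b \<Longrightarrow> ln b - ln a \<le> (b - a) / a"
proof -
  assume a: "0 < a" and ab: "a \<le> b"
  have "ln (b / a) \<le> b / a - 1" by (rule ln_le_minus_one) (use a ab in simp)
  then show ?thesis using a ab by (simp add: ln_div diff_divide_distrib)
qed

lemma b_pointwise:
  assumes n: "n \<ge> 2" and d: "d \<ge> 1"
  shows "\<bar>ln (real (p d n)) - (real n - 1) * (ln (real d) - ln (real n) + 1)\<bar>
         \<le> 2 * real n ^ 3 / real d + 1 + ln (real n)"
proof -
  define k where "k = real (n - 1)"
  have k: "k = real n - 1" "k \<ge> 1" using n by (auto simp: k_def)
  have dpos: "real d > 0" using d by simp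
  have U: "ln (real (p d n)) \<le> k * ln (real d + k) - k * ln k + k + real n ^ 3 / real d"
    using ln_p_upper[OF n d order_refl] unfolding k_def .
  have L: "k * ln (real d) - 1 - real n * ln k + k \<le> ln (real (p d n))"
    using ln_p_lower[OF n d] unfolding k_def .
  have a1: "ln (real d + k) - ln (real d) \<le> k / real d"
    using ln_diff_le[of "real d" "real d + k"] dpos k by simp
  have a2: "ln (real n) - ln k \<le> 1 / k"
    using ln_diff_le[of k "real n"] k by simp
  have a2': "ln k \<le> ln (real n)" using k by (intro ln_mono) auto
  have "k * (ln (real d + k) - ln (real d)) \<le> k * (k / real d)"
    using a1 k by (intro mult_left_mono) auto
  also have "\<dots> \<le> real n ^ 3 / real d"
  proof -
    have "k * k \<le> real n * real n" using k by (intro mult_mono) auto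
    also have "\<dots> \<le> real n * real n * real n" using n by simp
    finally have "k * k \<le> real n ^ 3" by (simp add: power3_eq_cube)
    then have "(k * k) / real d \<le> real n ^ 3 / real d" using dpos by (intro divide_right_mono) auto
    then show ?thesis by simp
  qed
  finally have b1: "k * (ln (real d + k) - ln (real d)) \<le> real n ^ 3 / real d" .
  have b2: "k * (ln (real n) - ln k) \<le> 1"
    using mult_left_mono[OF a2, of k] k by simp
  have b3: "k * (ln (real n) - ln k) \<ge> 0" using a2' k by simp
  have lnn: "ln (real n) \<ge> 0" using n by simp
  have up: "ln (real (p d n)) - (real n - 1) * (ln (real d) - ln (real n) + 1) \<le> 2 * real n ^ 3 / real d + 1"
    using U b1 b2 k(1) by (simp add: algebra_simps)
  have lo: "ln (real (p d n)) - (real n - 1) * (ln (real d) - ln (real n) + 1) \<ge> - 1 - ln (real n)"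
    using L b3 a2' k(1) by (simp add: algebra_simps)
  have nn: "2 * real n ^ 3 / real d \<ge> 0" by simp
  show ?thesis unfolding abs_le_iff using up lo lnn nn by linarith
qed

lemma kln_bound:
  assumes n: "n \<ge> 2"
  shows "real (n - 1) * ln (real (n - 1)) \<ge> real (n - 1) * ln (real n) - 1"
    "ln (real (n - 1)) \<le> ln (real n)" "ln (real (n - 1)) \<ge> 0"
proof -
  define k where "k = real (n - 1)"
  have k: "k = real n - 1" "k \<ge> 1" using n by (auto simp: k_def)
  have a2: "ln (real n) - ln k \<le> 1 / k"
    using ln_diff_le[of k "real n"] k by simp
  have "k * (ln (real n) - ln k) \<le> 1"
    using mult_left_mono[OF a2, of k] k by simp
  then show "real (n - 1) * ln (real (n - 1)) \<ge> real (n - 1) * ln (real n) - 1"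
    unfolding k_def[symmetric] by (simp add: algebra_simps)
  show "ln (real (n - 1)) \<le> ln (real n)" using n by (intro ln_mono) auto
  show "ln (real (n - 1)) \<ge> 0" using n by simp
qed

lemma c_pointwise:
  assumes n: "n \<ge> 2" and d: "d \<ge> 1" and c0: "c0 > 0" and C: "C > 0"
    and lo: "c0 * real n ^ 2 \<le> real d" and hi: "real d \<le> C * real n ^ 2"
  shows "\<bar>ln (real (p d n)) - real n * ln (real n)\<bar> \<le> (ln (C + 1) + 3 + 1 / c0 + \<bar>ln c0\<bar>) * real n"
proof -
  define k where "k = real (n - 1)"
  have k: "k = real n - 1" "k \<ge> 1" using n by (auto simp: k_def)
  have x: "real n \<ge> 2" using n by simp
  have dpos: "real d > 0" using d by simp
  have U: "ln (real (p d n)) \<le> k * ln (real d + k) - k * ln k + k + real n ^ 3 / real d"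
    using ln_p_upper[OF n d order_refl] unfolding k_def .
  have L: "k * ln (real d) - 1 - real n * ln k + k \<le> ln (real (p d n))"
    using ln_p_lower[OF n d] unfolding k_def .
  note kb = kln_bound[OF n, folded k_def]
  have lnn: "ln (real n) \<ge> 0" "ln (real n) \<le> real n" using x by (auto intro: ln_le_minus_one[THEN order_trans])
  have kn2: "k \<le> real n ^ 2"
  proof -
    have "real n * 1 \<le> real n * real n" using x by (intro mult_left_mono) auto
    then show ?thesis using k unfolding power2_eq_square by linarith
  qed
  have "real d + k \<le> C * real n ^ 2 + real n ^ 2" using hi kn2 by linarith
  also have "\<dots> = (C + 1) * real n ^ 2" by (simp add: algebra_simps)
  finally have "ln (real d + k) \<le> ln ((C + 1) * real n ^ 2)" using dpos k by (intro ln_mono) auto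
  also have "\<dots> = ln (C + 1) + 2 * ln (real n)" using C x by (simp add: ln_mult ln_realpow)
  finally have u1: "ln (real d + k) \<le> ln (C + 1) + 2 * ln (real n)" .
  have "k * ln (real d + k) \<le> k * (ln (C + 1) + 2 * ln (real n))"
    by (rule mult_left_mono[OF u1]) (use k in auto)
  then have u2: "k * ln (real d + k) \<le> k * ln (C + 1) + 2 * k * ln (real n)"
    by (simp add: algebra_simps)
  have "real n ^ 3 / real d \<le> real n ^ 3 / (c0 * real n ^ 2)"
  proof (rule divide_left_mono[OF lo])
    have "0 < c0 * real n ^ 2" using c0 x by simp
    then show "0 < real d * (c0 * real n ^ 2)" using dpos by simp
  qed simp
  also have "\<dots> = real n / c0" using x by (simp add: power2_eq_square power3_eq_cube)
  finally have u3: "real n ^ 3 / real d \<le> real n / c0" .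
  have lnC: "ln (C + 1) \<ge> 0" using C by simp
  have u4: "k * ln (C + 1) \<le> real n * ln (C + 1)" using k lnC by (intro mult_right_mono) auto
  have u5: "real n / c0 = (1 / c0) * real n" by simp
  have up: "ln (real (p d n)) - real n * ln (real n) \<le> (ln (C + 1) + 3 + 1 / c0 + \<bar>ln c0\<bar>) * real n"
  proof -
    have "ln (real (p d n)) - real n * ln (real n) \<le> k * ln (C + 1) + 2 * k * ln (real n) - (k * ln (real n) - 1) + k + real n / c0 - real n * ln (real n)"
      using U u2 u3 kb(1) by linarith
    also have "\<dots> = k * ln (C + 1) + 1 + k + real n / c0 - ln (real n)"
    proof -
      have nk: "real n = k + 1" using k(1) by simp
      have "real n * ln (real n) = k * ln (real n) + ln (real n)" by (simp add: nk algebra_simps)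
      then show ?thesis by linarith
    qed
    also have "\<dots> \<le> real n * ln (C + 1) + real n + real n + (1 / c0) * real n"
      using u4 k lnn x u5 by linarith
    also have "\<dots> \<le> (ln (C + 1) + 3 + 1 / c0 + \<bar>ln c0\<bar>) * real n"
      using x by (simp add: algebra_simps)
    finally show ?thesis .
  qed
  have "ln (real d) \<ge> ln (c0 * real n ^ 2)" using lo c0 x by (intro ln_mono) auto
  also have "ln (c0 * real n ^ 2) = ln c0 + 2 * ln (real n)" using c0 x by (simp add: ln_mult ln_realpow)
  finally have l1: "ln (real d) \<ge> ln c0 + 2 * ln (real n)" .
  have "k * (ln c0 + 2 * ln (real n)) \<le> k * ln (real d)"
    by (rule mult_left_mono[OF l1]) (use k in auto)
  then have l2: "k * ln (real d) \<ge> k * ln c0 + 2 * k * ln (real n)"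
    by (simp add: algebra_simps)
  have l3: "real n * ln k \<le> real n * ln (real n)" using kb(2) x by (intro mult_left_mono) auto
  have l4: "k * ln c0 \<ge> - \<bar>ln c0\<bar> * real n"
  proof -
    have ab: "\<bar>k * ln c0\<bar> = k * \<bar>ln c0\<bar>" using k(2) by (simp add: abs_mult)
    have "k * ln c0 \<ge> - \<bar>k * ln c0\<bar>" by simp
    then have "k * ln c0 \<ge> - (k * \<bar>ln c0\<bar>)" unfolding ab .
    moreover have "k * \<bar>ln c0\<bar> \<le> real n * \<bar>ln c0\<bar>" using k by (intro mult_right_mono) auto
    ultimately show ?thesis by (simp add: mult.commute)
  qed
  have low: "ln (real (p d n)) - real n * ln (real n) \<ge> - ((ln (C + 1) + 3 + 1 / c0 + \<bar>ln c0\<bar>) * real n)"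
  proof -
    have "ln (real (p d n)) - real n * ln (real n) \<ge> k * ln c0 + 2 * k * ln (real n) - 1 - real n * ln (real n) + k - real n * ln (real n)"
      using L l2 l3 by linarith
    also have "k * ln c0 + 2 * k * ln (real n) - 1 - real n * ln (real n) + k - real n * ln (real n)
        = k * ln c0 - 2 * ln (real n) - 1 + k"
    proof -
      have nk: "real n = k + 1" using k(1) by simp
      show ?thesis by (simp add: nk algebra_simps)
    qed
    finally have "ln (real (p d n)) - real n * ln (real n) \<ge> - \<bar>ln c0\<bar> * real n - 2 * real n - real n"
      using l4 lnn k x by linarith
    moreover have "(ln (C + 1) + 3 + 1 / c0 + \<bar>ln c0\<bar>) * real n \<ge> \<bar>ln c0\<bar> * real n + 3 * real n"
      using lnC c0 x by (simp add: algebra_simps)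
    ultimately show ?thesis by linarith
  qed
  show ?thesis unfolding abs_le_iff using up low by linarith
qed

lemma d_upper_pointwise:
  assumes n: "n \<ge> 2" and d: "d \<ge> 1" and hi: "d \<le> n ^ 2"
  shows "ln (real (p d n)) - real n * ln (real n) \<le> 4 * real n"
proof -
  define k where "k = real (n - 1)"
  have k: "k = real n - 1" "k \<ge> 1" using n by (auto simp: k_def)
  have x: "real n \<ge> 2" using n by simp
  have U: "ln (real (p d n)) \<le> k * ln (real (n ^ 2) + k) - k * ln k + k + real n ^ 3 / real (n ^ 2)"
    using ln_p_upper[OF n d hi] unfolding k_def .
  note kb = kln_bound[OF n, folded k_def]
  have lnn: "ln (real n) \<ge> 0" using x by simp
  have kn2: "k \<le> real n ^ 2"
  proof -
    have "real n * 1 \<le> real n * real n" using x by (intro mult_left_mono) auto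
    then show ?thesis using k unfolding power2_eq_square by linarith
  qed
  have "real (n ^ 2) + k \<le> 2 * real n ^ 2" using kn2 by simp
  then have "ln (real (n ^ 2) + k) \<le> ln (2 * real n ^ 2)" using k by (intro ln_mono) auto
  also have "\<dots> = ln 2 + 2 * ln (real n)" using x by (simp add: ln_mult ln_realpow)
  finally have u1: "ln (real (n ^ 2) + k) \<le> ln 2 + 2 * ln (real n)" .
  have ln2: "ln (2::real) \<le> 1" using ln_le_minus_one[of 2] by simp
  have "k * ln (real (n ^ 2) + k) \<le> k * (ln 2 + 2 * ln (real n))"
    by (rule mult_left_mono[OF u1]) (use k in auto)
  then have u2: "k * ln (real (n ^ 2) + k) \<le> k * ln 2 + 2 * k * ln (real n)"
    by (simp add: algebra_simps)
  have u3: "real n ^ 3 / real (n ^ 2) = real n" using x by (simp add: power2_eq_square power3_eq_cube)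
  have u4: "k * ln 2 \<le> k" using ln2 k by (simp add: mult_left_le)
  have "ln (real (p d n)) - real n * ln (real n) \<le> k * ln 2 + 2 * k * ln (real n) - (k * ln (real n) - 1) + k + real n - real n * ln (real n)"
    using U u2 u3 kb(1) by linarith
  also have "\<dots> = k * ln 2 + 1 + k + real n - ln (real n)"
  proof -
    have nk: "real n = k + 1" using k(1) by simp
    have "real n * ln (real n) = k * ln (real n) + ln (real n)" by (simp add: nk algebra_simps)
    then show ?thesis by linarith
  qed
  also have "\<dots> \<le> 4 * real n" using u4 k lnn x by linarith
  finally show ?thesis .
qed


lemma choose2_nat: "2 * (K choose 2) = K * (K - 1)"
proof (induction K)
  case 0 then show ?case by simp
next
  case (Suc K)
  have "(Suc K choose 2) = (K choose 1) + (K choose 2)"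
    using binomial_Suc_Suc[of K 1] by (simp add: numeral_2_eq_2)
  then show ?case using Suc by (cases K) (auto simp: algebra_simps)
qed

lemma choose2_real: "real (K choose 2) = real K * (real K - 1) / 2"
proof -
  have "real (2 * (K choose 2)) = real (K * (K - 1))" using choose2_nat[of K] by simp
  then show ?thesis by (cases K) (auto simp: field_simps)
qed

lemma graph_lnp:
  assumes n: "n \<ge> 2" and eta: "0 < \<eta>" "\<eta> \<le> 1/8"
    and hd: "real n powr (1 - \<eta>) \<le> real d"
    and h8: "real n powr (1 - 2 * \<eta>) \<ge> 8"
    and hs: "real n powr (1 - \<eta>) \<le> \<eta> * real n"
  shows "(real n - 1 - real n powr (1 - \<eta>)) * ((1 - 2 * \<eta>) * ln (real n) - ln 8) \<le> ln (real (p d n))"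
proof -
  define x where "x = real n"
  define y where "y = x powr (1 - \<eta>)"
  have x2: "x \<ge> 2" using n by (simp add: x_def)
  have "x powr (1 - 2 * \<eta>) \<le> y" unfolding y_def using x2 eta by (intro powr_mono) auto
  then have y8: "y \<ge> 8" using h8 by (simp add: x_def)
  define K where "K = nat \<lfloor>y\<rfloor>"
  have Kr: "real K = of_int \<lfloor>y\<rfloor>" using y8 by (simp add: K_def)
  have K1: "real K \<le> y" unfolding Kr by simp
  have K2: "real K > y - 1" unfolding Kr by linarith
  have Kd: "K \<le> d" using K1 hd by (simp add: y_def x_def)
  have ex: "\<eta> * x \<le> (1/8) * x" using eta x2 by (intro mult_right_mono) auto
  have yx: "y \<le> x / 8" using hs ex unfolding y_def x_def by simp
  have "real K \<le> x / 8" using K1 yx by simp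
  then have "real (K + 1) \<le> real n" using x2 by (simp add: x_def)
  then have Kn: "K + 1 \<le> n" by (simp only: of_nat_le_iff)
  define m where "m = n - 1 - K"
  have mr: "real m = x - 1 - real K" using Kn by (simp add: m_def x_def)
  have m0: "real m \<ge> x - 1 - y" using mr K1 by simp
  have mx: "real m \<le> x" using mr by simp
  have mpos: "real m > 0" using m0 yx x2 by simp
  define N where "N = K choose 2"
  have Nr: "real N = real K * (real K - 1) / 2" by (simp add: N_def choose2_real)
  have "real K - 1 \<ge> y / 2" using K2 y8 by simp
  then have "(real K - 1) * (real K - 1) \<ge> (y / 2) * (y / 2)" using y8 by (intro mult_mono) auto
  moreover have "real K * (real K - 1) \<ge> (real K - 1) * (real K - 1)" using K2 y8 by (intro mult_right_mono) auto
  ultimately have "real N \<ge> y * y / 8" unfolding Nr by simp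
  moreover have "y * y = x * x powr (1 - 2 * \<eta>)"
  proof -
    have "y * y = x powr ((1 - \<eta>) + (1 - \<eta>))" unfolding y_def by (simp only: powr_add)
    also have "(1 - \<eta>) + (1 - \<eta>) = 1 + (1 - 2 * \<eta>)" by simp
    also have "x powr (1 + (1 - 2 * \<eta>)) = x powr 1 * x powr (1 - 2 * \<eta>)" by (simp only: powr_add)
    also have "x powr 1 = x" using x2 by simp
    finally show ?thesis .
  qed
  ultimately have Nge: "real N \<ge> x * x powr (1 - 2 * \<eta>) / 8" by simp
  have h8x: "x powr (1 - 2 * \<eta>) \<ge> 8" using h8 by (simp add: x_def)
  have "x * x powr (1 - 2 * \<eta>) / 8 \<ge> x * 8 / 8" using h8x x2 by (intro divide_right_mono mult_left_mono) auto
  then have "real N \<ge> x" using Nge by simp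
  then have mN: "m \<le> N" using mx by simp
  have "(real N / real m) ^ m \<le> real (N choose m)" by (rule binomial_ge_n_over_k_pow_k[OF mN])
  also have "real (N choose m) \<le> real (p d n)" using p_lower_graph[OF Kd Kn] by (simp add: N_def m_def)
  finally have pb: "(real N / real m) ^ m \<le> real (p d n)" .
  have ratio: "real N / real m \<ge> x powr (1 - 2 * \<eta>) / 8"
  proof -
    have "real N / real m \<ge> (x * x powr (1 - 2 * \<eta>) / 8) / x"
      using Nge mx mpos x2 by (intro frac_le) auto
    then show ?thesis using x2 by simp
  qed
  have rpos: "x powr (1 - 2 * \<eta>) / 8 > 0" using x2 by simp
  have "ln (x powr (1 - 2 * \<eta>) / 8) \<le> ln (real N / real m)" using ratio rpos by (intro ln_mono) auto
  moreover have "ln (x powr (1 - 2 * \<eta>) / 8) = (1 - 2 * \<eta>) * ln x - ln 8"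
    using x2 by (simp add: ln_div ln_powr)
  ultimately have lr: "(1 - 2 * \<eta>) * ln x - ln 8 \<le> ln (real N / real m)" by simp
  have L0: "(1 - 2 * \<eta>) * ln x - ln 8 \<ge> 0"
  proof -
    have "ln 8 \<le> ln (x powr (1 - 2 * \<eta>))" using h8x by (intro ln_mono) auto
    then show ?thesis using x2 by (simp add: ln_powr)
  qed
  have "real N / real m > 0" using ratio rpos by linarith
  then have "(real N / real m) ^ m > 0" by simp
  then have "ln ((real N / real m) ^ m) \<le> ln (real (p d n))"
    using pb by (intro ln_mono) auto
  moreover have "ln ((real N / real m) ^ m) = real m * ln (real N / real m)" by (simp add: ln_realpow)
  ultimately have "real m * ln (real N / real m) \<le> ln (real (p d n))" by simp
  moreover have "real m * ((1 - 2 * \<eta>) * ln x - ln 8) \<le> real m * ln (real N / real m)"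
    using lr by (intro mult_left_mono) auto
  moreover have "(x - 1 - y) * ((1 - 2 * \<eta>) * ln x - ln 8) \<le> real m * ((1 - 2 * \<eta>) * ln x - ln 8)"
    using m0 L0 by (intro mult_right_mono) auto
  ultimately show ?thesis unfolding y_def x_def by linarith
qed


lemma ev_real_ge: "eventually (\<lambda>n. T \<le> real n) sequentially"
proof (rule eventually_sequentiallyI[of "nat \<lceil>T\<rceil>"])
  fix n assume "nat \<lceil>T\<rceil> \<le> n"
  then have "real (nat \<lceil>T\<rceil>) \<le> real n" by simp
  moreover have "T \<le> real (nat \<lceil>T\<rceil>)" by (rule real_nat_ceiling_ge)
  ultimately show "T \<le> real n" by linarith
qed

lemma powr_thr:
  fixes a B x :: real
  assumes a: "0 < a" and B: "0 < B" and x: "B powr (1 / a) \<le> x"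
  shows "B \<le> x powr a"
proof -
  have e1: "(B powr (1 / a)) powr a = B powr (1 / a * a)" by (rule powr_powr)
  have e2: "1 / a * a = 1" using a by simp
  have "B = (B powr (1 / a)) powr a" unfolding e1 e2 using B by simp
  also have "\<dots> \<le> x powr a" using x a by (intro powr_mono2) auto
  finally show ?thesis .
qed

lemma ln_le_2sqrt: "(x::real) > 0 \<Longrightarrow> ln x \<le> 2 * sqrt x"
proof -
  assume x: "x > 0"
  have "ln (sqrt x) \<le> sqrt x - 1" using x by (intro ln_le_minus_one) simp
  moreover have "ln (sqrt x) = ln x / 2" using x by (simp add: ln_sqrt)
  ultimately show ?thesis by simp
qed

lemma ev_lin:
  assumes c: "c > 0"
  shows "eventually (\<lambda>n. 1 + ln (real n) \<le> c * real n) sequentially"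
  using ev_real_ge[of "max 1 (max (2 / c) ((4 / c)^2))"]
proof eventually_elim
  case (elim n)
  define x where "x = real n"
  have x1: "x \<ge> 1" and x2: "x \<ge> 2 / c" and x3: "x \<ge> (4 / c)^2" using elim by (auto simp: x_def)
  have "sqrt x \<ge> sqrt ((4 / c)^2)" using x3 by (rule real_sqrt_le_mono)
  then have s: "sqrt x \<ge> 4 / c" using c by simp
  have "2 * sqrt x = (c / 2) * sqrt x * (4 / c)" using c by simp
  also have "\<dots> \<le> (c / 2) * sqrt x * sqrt x" by (rule mult_left_mono[OF s]) (use c x1 in simp)
  also have "\<dots> = (c / 2) * x" using x1 by simp
  finally have a: "2 * sqrt x \<le> (c / 2) * x" .
  have b: "1 \<le> (c / 2) * x" using x2 c by (simp add: field_simps)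
  have "ln x \<le> 2 * sqrt x" using x1 by (intro ln_le_2sqrt) simp
  then show ?case using a b by (simp add: x_def)
qed

lemma part_b:
  assumes dpos: "\<forall>n\<ge>1. d n \<ge> 1"
    and lim: "filterlim (\<lambda>n. real (d n) / real n ^ 2) at_top sequentially"
  shows "(\<lambda>n. ln (real (p (d n) n)) - (real n - 1) * (ln (real (d n)) - ln (real n) + 1)) \<in> o(\<lambda>n. real n)"
proof (rule landau_o.smallI)
  fix c :: real assume c: "c > 0"
  have e1: "eventually (\<lambda>n. 4 / c \<le> real (d n) / real n ^ 2) sequentially"
    using lim by (simp add: filterlim_at_top)
  have e2: "eventually (\<lambda>n. 1 + ln (real n) \<le> (c / 2) * real n) sequentially"
    using ev_lin[of "c / 2"] c by simp
  have e3: "eventually (\<lambda>n. 2 \<le> n) sequentially" by (rule eventually_ge_at_top)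
  show "eventually (\<lambda>n. norm (ln (real (p (d n) n)) - (real n - 1) * (ln (real (d n)) - ln (real n) + 1))
          \<le> c * norm (real n)) sequentially"
    using e1 e2 e3
  proof eventually_elim
    case (elim n)
    have n: "n \<ge> 2" and d: "d n \<ge> 1" using elim dpos by auto
    have x: "real n \<ge> 2" using n by simp
    have dp: "real (d n) > 0" using d by simp
    have "4 / c * real n ^ 2 \<le> real (d n)" using elim(1) x by (simp add: field_simps)
    then have "real n ^ 3 / real (d n) \<le> real n ^ 3 / (4 / c * real n ^ 2)"
      using c x dp by (intro divide_left_mono) auto
    also have "\<dots> = c * real n / 4" using x c by (simp add: power2_eq_square power3_eq_cube field_simps)
    finally have t0: "real n ^ 3 / real (d n) \<le> c * real n / 4" .
    have "2 * real n ^ 3 / real (d n) = 2 * (real n ^ 3 / real (d n))" by simp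
    then have t: "2 * real n ^ 3 / real (d n) \<le> c * real n / 2" using t0 by linarith
    have "\<bar>ln (real (p (d n) n)) - (real n - 1) * (ln (real (d n)) - ln (real n) + 1)\<bar>
          \<le> 2 * real n ^ 3 / real (d n) + 1 + ln (real n)" by (rule b_pointwise[OF n d])
    then show ?case using t elim(2) by simp
  qed
qed

lemma part_c:
  assumes dpos: "\<forall>n\<ge>1. d n \<ge> 1"
    and h: "\<exists>c C. c > 0 \<and> C > 0 \<and>
          (\<forall>\<^sub>F n in sequentially. c * real n ^ 2 \<le> real (d n) \<and> real (d n) \<le> C * real n ^ 2)"
  shows "(\<lambda>n. ln (real (p (d n) n)) - real n * ln (real n)) \<in> O(\<lambda>n. real n)"
proof -
  obtain c0 C where c0: "c0 > 0" and C: "C > 0"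
    and ev: "\<forall>\<^sub>F n in sequentially. c0 * real n ^ 2 \<le> real (d n) \<and> real (d n) \<le> C * real n ^ 2"
    using h by blast
  let ?K = "ln (C + 1) + 3 + 1 / c0 + \<bar>ln c0\<bar>"
  have Kpos: "?K > 0" using C c0 by (simp add: add_pos_nonneg)
  show ?thesis
  proof (rule landau_o.bigI[OF Kpos])
    show "eventually (\<lambda>n. norm (ln (real (p (d n) n)) - real n * ln (real n)) \<le> ?K * norm (real n)) sequentially"
      using ev eventually_ge_at_top[of 2]
    proof eventually_elim
      case (elim n)
      have n: "n \<ge> 2" and d: "d n \<ge> 1" using elim dpos by auto
      show ?case using c_pointwise[OF n d c0 C] elim by simp
    qed
  qed
qed

lemma ln8_le3: "ln (8::real) \<le> 3"
proof -
  have "1 + 3 + (3::real)^2 / 2 \<le> exp 3" by (rule exp_lower_Taylor_quadratic) simp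
  then have "(8::real) \<le> exp 3" by simp
  then have "ln (8::real) \<le> ln (exp 3)" by (intro ln_mono) auto
  then show ?thesis by simp
qed

lemma part_d:
  assumes dpos: "\<forall>n\<ge>1. d n \<ge> 1"
    and lim: "(\<lambda>n. real (d n) / real n ^ 2) \<longlonglongrightarrow> 0"
    and h: "\<exists>g. g \<in> o(\<lambda>n. ln (real n)) \<and> (\<forall>\<^sub>F n in sequentially. ln (real (d n)) \<ge> ln (real n) + g n)"
  shows "(\<lambda>n. ln (real (p (d n) n)) - real n * ln (real n)) \<in> o(\<lambda>n. real n * ln (real n))"
proof -
  obtain g where g: "g \<in> o(\<lambda>n. ln (real n))"
    and hg: "\<forall>\<^sub>F n in sequentially. ln (real (d n)) \<ge> ln (real n) + g n" using h by blast
  show ?thesis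
  proof (rule landau_o.smallI)
    fix c :: real assume c: "c > 0"
    define \<eta> where "\<eta> = min (1/8) (c / 6)"
    have eta: "0 < \<eta>" "\<eta> \<le> 1/8" "\<eta> \<le> c / 6" using c by (auto simp: \<eta>_def)
    have eg: "eventually (\<lambda>n. norm (g n) \<le> \<eta> * norm (ln (real n))) sequentially"
      by (rule landau_o.smallD[OF g eta(1)])
    have el: "eventually (\<lambda>n. real (d n) / real n ^ 2 < 1) sequentially"
      using lim by (rule order_tendstoD) simp
    have eT1: "eventually (\<lambda>n. 8 powr (1 / (1 - 2 * \<eta>)) \<le> real n) sequentially" by (rule ev_real_ge)
    have eT2: "eventually (\<lambda>n. (1 / \<eta>) powr (1 / \<eta>) \<le> real n) sequentially" by (rule ev_real_ge)
    have eT3: "eventually (\<lambda>n. 4 / c \<le> real n) sequentially" by (rule ev_real_ge)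
    have eT4: "eventually (\<lambda>n. exp (12 / c) \<le> real n) sequentially" by (rule ev_real_ge)
    have eT5: "eventually (\<lambda>n. exp (4 / c) \<le> real n) sequentially" by (rule ev_real_ge)
    show "eventually (\<lambda>n. norm (ln (real (p (d n) n)) - real n * ln (real n)) \<le> c * norm (real n * ln (real n))) sequentially"
      using eg hg el eT1 eT2 eT3 eT4 eT5 eventually_ge_at_top[of 2]
    proof eventually_elim
      case (elim n)
      define x where "x = real n"
      have n: "n \<ge> 2" and d: "d n \<ge> 1" using elim dpos by auto
      have x2: "x \<ge> 2" using n by (simp add: x_def)
      have lnx: "ln x \<ge> 0" using x2 by simp
      have dp: "real (d n) > 0" using d by simp
      have xlnx: "x * ln x \<ge> 0" using x2 lnx by simp
      have nrm: "norm (real n * ln (real n)) = x * ln x" using xlnx by (simp add: x_def)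
      have "real (d n) < real n ^ 2" using elim(3) x2 by (simp add: x_def field_simps)
      then have "d n < n ^ 2" by (simp only: of_nat_power[symmetric] of_nat_less_iff)
      then have "d n \<le> n ^ 2" by simp
      then have up0: "ln (real (p (d n) n)) - real n * ln (real n) \<le> 4 * real n"
        by (rule d_upper_pointwise[OF n d])
      have "ln x \<ge> 4 / c"
      proof -
        have "ln (exp (4 / c)) \<le> ln x" using elim(8) x2 by (intro ln_mono) (auto simp: x_def)
        then show ?thesis by simp
      qed
      then have "c * ln x \<ge> 4" using c by (simp add: field_simps)
      then have "x * 4 \<le> x * (c * ln x)" using x2 by (intro mult_left_mono) auto
      then have "4 * x \<le> c * (x * ln x)" by (simp add: algebra_simps)
      then have up: "ln (real (p (d n) n)) - real n * ln (real n) \<le> c * (x * ln x)" using up0 by (simp add: x_def)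
      have "\<bar>g n\<bar> \<le> \<eta> * ln x" using elim(1) lnx by (simp add: x_def)
      then have "ln (real (d n)) \<ge> (1 - \<eta>) * ln x" using elim(2) by (simp add: x_def algebra_simps)
      then have "exp ((1 - \<eta>) * ln x) \<le> exp (ln (real (d n)))" by simp
      then have hd: "x powr (1 - \<eta>) \<le> real (d n)" using dp x2 by (simp add: powr_def)
      have h8: "x powr (1 - 2 * \<eta>) \<ge> 8"
        by (rule powr_thr) (use eta elim(4) in \<open>auto simp: x_def\<close>)
      have heta: "x powr \<eta> \<ge> 1 / \<eta>"
        by (rule powr_thr) (use eta elim(5) in \<open>auto simp: x_def\<close>)
      have hs: "x powr (1 - \<eta>) \<le> \<eta> * x"
      proof -
        have "x powr (1 - \<eta>) = x powr 1 / x powr \<eta>" by (simp only: powr_diff)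
        also have "\<dots> = x / x powr \<eta>" using x2 by simp
        also have "\<dots> \<le> x / (1 / \<eta>)" using heta eta x2 by (intro divide_left_mono) auto
        also have "\<dots> = \<eta> * x" by simp
        finally show ?thesis .
      qed
      have G: "(x - 1 - x powr (1 - \<eta>)) * ((1 - 2 * \<eta>) * ln x - ln 8) \<le> ln (real (p (d n) n))"
        using graph_lnp[OF n eta(1) eta(2)] hd h8 hs by (simp add: x_def)
      define L0 where "L0 = (1 - 2 * \<eta>) * ln x - ln 8"
      have L0: "L0 \<ge> 0"
      proof -
        have "ln 8 \<le> ln (x powr (1 - 2 * \<eta>))" using h8 by (intro ln_mono) auto
        then show ?thesis using x2 by (simp add: ln_powr L0_def)
      qed
      have g1: "(x - 1 - \<eta> * x) * L0 \<le> (x - 1 - x powr (1 - \<eta>)) * L0"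
        using hs L0 by (intro mult_right_mono) auto
      have f1: "(x - 1 - \<eta> * x) * L0 = (1 - \<eta>) * (1 - 2 * \<eta>) * (x * ln x) - (1 - \<eta>) * x * ln 8 - (1 - 2 * \<eta>) * ln x + ln 8"
        by (simp add: L0_def algebra_simps)
      have f2: "(1 - 3 * \<eta>) * (x * ln x) \<le> (1 - \<eta>) * (1 - 2 * \<eta>) * (x * ln x)"
      proof (rule mult_right_mono)
        have "(1 - \<eta>) * (1 - 2 * \<eta>) = 1 - 3 * \<eta> + 2 * \<eta>^2" by (simp add: algebra_simps power2_eq_square)
        then show "1 - 3 * \<eta> \<le> (1 - \<eta>) * (1 - 2 * \<eta>)" by simp
      qed (rule xlnx)
      have f3: "(1 - \<eta>) * x * ln 8 \<le> 1 * x * 3"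
        using ln8_le3 eta x2 by (intro mult_mono) auto
      have f4: "(1 - 2 * \<eta>) * ln x \<le> ln x" using eta lnx by (simp add: mult_left_le_one_le)
      have f5: "ln (8::real) \<ge> 0" by simp
      have low0: "ln (real (p (d n) n)) \<ge> (1 - 3 * \<eta>) * (x * ln x) - 3 * x - ln x"
        using G g1 f1 f2 f3 f4 f5 unfolding L0_def by linarith
      have f6: "3 * \<eta> * (x * ln x) \<le> (c / 2) * (x * ln x)" using eta xlnx by (intro mult_right_mono) auto
      have "ln x \<ge> 12 / c"
      proof -
        have "ln (exp (12 / c)) \<le> ln x" using elim(7) x2 by (intro ln_mono) (auto simp: x_def)
        then show ?thesis by simp
      qed
      then have "(c / 4) * ln x \<ge> 3" using c by (simp add: field_simps)
      then have "x * 3 \<le> x * ((c / 4) * ln x)" using x2 by (intro mult_left_mono) auto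
      then have f7: "(c / 4) * (x * ln x) \<ge> 3 * x" by (simp add: algebra_simps)
      have "(c / 4) * x \<ge> 1" using elim(6) c by (simp add: x_def field_simps)
      then have "1 * ln x \<le> ((c / 4) * x) * ln x" using lnx by (intro mult_right_mono) auto
      then have f8: "(c / 4) * (x * ln x) \<ge> ln x" by (simp add: algebra_simps)
      have xn: "real n = x" by (simp add: x_def)
      have q1: "(1 - 3 * \<eta>) * (x * ln x) = x * ln x - 3 * \<eta> * (x * ln x)" by (simp add: algebra_simps)
      have q2: "c * (x * ln x) = c / 2 * (x * ln x) + c / 4 * (x * ln x) + c / 4 * (x * ln x)" by (simp add: algebra_simps)
      have low: "ln (real (p (d n) n)) - x * ln x \<ge> - (c * (x * ln x))"
        using low0 f6 f7 f8 q1 q2 by linarith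
      have up': "ln (real (p (d n) n)) - x * ln x \<le> c * (x * ln x)" using up unfolding xn .
      show ?case unfolding nrm unfolding xn using up' low by (simp add: abs_le_iff)
    qed
  qed
qed



theorem theorem2:
  fixes d :: "nat \<Rightarrow> nat"
  assumes dpos: "\<forall>n\<ge>1. d n \<ge> 1"
  shows
    "(\<forall>n\<ge>1. real (d n) > real n ^ 3 / 2 \<longrightarrow>
        1 \<le> real (p (d n) n) / real ((d n + n - 2) choose (d n - 1)) \<and>
        real (p (d n) n) / real ((d n + n - 2) choose (d n - 1))
          < 1 / (1 - real n ^ 3 / (2 * real (d n))))
   \<and> (filterlim (\<lambda>n. real (d n) / real n ^ 2) at_top sequentially \<longrightarrow>
        (\<lambda>n. ln (real (p (d n) n))
              - (real n - 1) * (ln (real (d n)) - ln (real n) + 1)) \<in> o(\<lambda>n. real n))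
   \<and> ((\<exists>c C. c > 0 \<and> C > 0 \<and>
          (\<forall>\<^sub>F n in sequentially. c * real n ^ 2 \<le> real (d n) \<and> real (d n) \<le> C * real n ^ 2)) \<longrightarrow>
        (\<lambda>n. ln (real (p (d n) n)) - real n * ln (real n)) \<in> O(\<lambda>n. real n))
   \<and> (((\<lambda>n. real (d n) / real n ^ 2) \<longlonglongrightarrow> 0) \<and>
       (\<exists>g. g \<in> o(\<lambda>n. ln (real n)) \<and>
          (\<forall>\<^sub>F n in sequentially. ln (real (d n)) \<ge> ln (real n) + g n)) \<longrightarrow>
        (\<lambda>n. ln (real (p (d n) n)) - real n * ln (real n)) \<in> o(\<lambda>n. real n * ln (real n)))"
proof (intro conjI)
  show "\<forall>n\<ge>1. real (d n) > real n ^ 3 / 2 \<longrightarrow>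
        1 \<le> real (p (d n) n) / real ((d n + n - 2) choose (d n - 1)) \<and>
        real (p (d n) n) / real ((d n + n - 2) choose (d n - 1))
          < 1 / (1 - real n ^ 3 / (2 * real (d n)))"
    using part_a dpos by blast
  show "filterlim (\<lambda>n. real (d n) / real n ^ 2) at_top sequentially \<longrightarrow>
        (\<lambda>n. ln (real (p (d n) n))
              - (real n - 1) * (ln (real (d n)) - ln (real n) + 1)) \<in> o(\<lambda>n. real n)"
    using part_b[OF dpos] by blast
  show "(\<exists>c C. c > 0 \<and> C > 0 \<and>
          (\<forall>\<^sub>F n in sequentially. c * real n ^ 2 \<le> real (d n) \<and> real (d n) \<le> C * real n ^ 2)) \<longrightarrow>
        (\<lambda>n. ln (real (p (d n) n)) - real n * ln (real n)) \<in> O(\<lambda>n. real n)"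
    using part_c[OF dpos] by blast
  show "(((\<lambda>n. real (d n) / real n ^ 2) \<longlonglongrightarrow> 0) \<and>
       (\<exists>g. g \<in> o(\<lambda>n. ln (real n)) \<and>
          (\<forall>\<^sub>F n in sequentially. ln (real (d n)) \<ge> ln (real n) + g n)) \<longrightarrow>
        (\<lambda>n. ln (real (p (d n) n)) - real n * ln (real n)) \<in> o(\<lambda>n. real n * ln (real n)))"
    using part_d[OF dpos] by blast
qed

end
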